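(* Fix a positive integer $n$, let $x=(x_1,\dots,x_n)$ and $u=(u_1,u_2,\dots)$, and let $\lambda$ be a partition with at most $n$ rows. Then $$s_\lambda(x\,|\,u)=\sum_T\prod_{\substack{\alpha\in\lambda\\ T(\alpha)\text{ unprimed}}}x_{T(\alpha)}\prod_{\substack{\alpha\in\lambda\\ T(\alpha)\text{ primed}}}\big(-u_{T(\alpha)}\big),$$ summed over all $\lambda$-supertableaux $T$ (for a primed entry $k'$, $u_{T(\alpha)}$ means $u_k$).
   Context: Partitions are identified with Young diagrams; box $(i,j)$ has content $c(\alpha)=j-i$; $\lambda'_j$ is the length of column $j$. $s_\lambda(x|u)=\sum_T\prod_{\alpha\in\lambda}(x_{T(\alpha)}-u_{T(\alpha)+c(\alpha)})$, summed over semistandard (weakly increasing along rows, strictly increasing down columns) tableaux $T$ of shape $\lambda$ with entries in $\{1,\dots,n\}$. A $\lambda$-supertableau is a filling of $\lambda$ with symbols from $\{1,\dots,n\}\cup\{1',2',3',\dots\}$ such that: in each row (resp. column) every primed symbol lies to the right of (resp. below) every unprimed symbol; unprimed symbols weakly increase along rows and strictly increase down columns; primed symbols strictly increase along rows and weakly increase down columns (comparing $k'$ by $k$); and every primed symbol $k'$ in column $j$ satisfies $k\le n-\lambda'_j+j$. *)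

theory Defs
  imports "HOL-Library.FuncSet"
begin

text \<open>A partition is a list of positive parts in weakly decreasing order.
  Rows and columns are indexed from 1; box (i,j) lies in row i, column j.\<close>

definition is_partition :: "nat list \<Rightarrow> bool" where
  "is_partition lam \<longleftrightarrow> (\<forall>p \<in> set lam. 0 < p) \<and> sorted (rev lam)"

definition boxes :: "nat list \<Rightarrow> (nat \<times> nat) set" where
  "boxes lam = {(i, j). 1 \<le> i \<and> i \<le> length lam \<and> 1 \<le> j \<and> j \<le> lam ! (i - 1)}"

definition content :: "nat \<times> nat \<Rightarrow> int" where
  "content a = int (snd a) - int (fst a)"

definition col_len :: "nat list \<Rightarrow> nat \<Rightarrow> nat" where
  "col_len lam j = card {i. (i, j) \<in> boxes lam}"

definition ssyt :: "nat \<Rightarrow> nat list \<Rightarrow> ((nat \<times> nat) \<Rightarrow> nat) set" where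
  "ssyt n lam = {T \<in> boxes lam \<rightarrow>\<^sub>E {1..n}.
     (\<forall>i j j'. (i, j) \<in> boxes lam \<and> (i, j') \<in> boxes lam \<and> j < j' \<longrightarrow> T (i, j) \<le> T (i, j')) \<and>
     (\<forall>i i' j. (i, j) \<in> boxes lam \<and> (i', j) \<in> boxes lam \<and> i < i' \<longrightarrow> T (i, j) < T (i', j))}"

definition factorial_schur :: "nat \<Rightarrow> nat list \<Rightarrow> (nat \<Rightarrow> 'a::comm_ring_1) \<Rightarrow> (nat \<Rightarrow> 'a) \<Rightarrow> 'a" where
  "factorial_schur n lam x u =
     (\<Sum>T \<in> ssyt n lam. \<Prod>a \<in> boxes lam. (x (T a) - u (nat (int (T a) + content a))))"

datatype sym = Unp nat | Pr nat

fun symval :: "sym \<Rightarrow> nat" where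
  "symval (Unp k) = k" | "symval (Pr k) = k"

fun is_primed :: "sym \<Rightarrow> bool" where
  "is_primed (Unp k) = False" | "is_primed (Pr k) = True"

definition symbols :: "nat \<Rightarrow> sym set" where
  "symbols n = Unp ` {1..n} \<union> Pr ` {1..}"

definition supertableaux :: "nat \<Rightarrow> nat list \<Rightarrow> ((nat \<times> nat) \<Rightarrow> sym) set" where
  "supertableaux n lam = {T \<in> boxes lam \<rightarrow>\<^sub>E symbols n.
     \<comment> \<open>rows: primed symbols lie to the right of unprimed ones\<close>
     (\<forall>i j j'. (i, j) \<in> boxes lam \<and> (i, j') \<in> boxes lam \<and> j < j' \<longrightarrow>
        \<not> (is_primed (T (i, j)) \<and> \<not> is_primed (T (i, j')))) \<and>
     \<comment> \<open>columns: primed symbols lie below unprimed ones\<close>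
     (\<forall>i i' j. (i, j) \<in> boxes lam \<and> (i', j) \<in> boxes lam \<and> i < i' \<longrightarrow>
        \<not> (is_primed (T (i, j)) \<and> \<not> is_primed (T (i', j)))) \<and>
     \<comment> \<open>unprimed: weakly increasing along rows\<close>
     (\<forall>i j j'. (i, j) \<in> boxes lam \<and> (i, j') \<in> boxes lam \<and> j < j' \<and>
        \<not> is_primed (T (i, j)) \<and> \<not> is_primed (T (i, j')) \<longrightarrow> symval (T (i, j)) \<le> symval (T (i, j'))) \<and>
     \<comment> \<open>unprimed: strictly increasing down columns\<close>
     (\<forall>i i' j. (i, j) \<in> boxes lam \<and> (i', j) \<in> boxes lam \<and> i < i' \<and>
        \<not> is_primed (T (i, j)) \<and> \<not> is_primed (T (i', j)) \<longrightarrow> symval (T (i, j)) < symval (T (i', j))) \<and>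
     \<comment> \<open>primed: strictly increasing along rows\<close>
     (\<forall>i j j'. (i, j) \<in> boxes lam \<and> (i, j') \<in> boxes lam \<and> j < j' \<and>
        is_primed (T (i, j)) \<and> is_primed (T (i, j')) \<longrightarrow> symval (T (i, j)) < symval (T (i, j'))) \<and>
     \<comment> \<open>primed: weakly increasing down columns\<close>
     (\<forall>i i' j. (i, j) \<in> boxes lam \<and> (i', j) \<in> boxes lam \<and> i < i' \<and>
        is_primed (T (i, j)) \<and> is_primed (T (i', j)) \<longrightarrow> symval (T (i, j)) \<le> symval (T (i', j))) \<and>
     \<comment> \<open>bound on primed entries: k' in column j has k \<le> n - lambda'_j + j\<close>
     (\<forall>i j. (i, j) \<in> boxes lam \<and> is_primed (T (i, j)) \<longrightarrow>
        int (symval (T (i, j))) \<le> int n - int (col_len lam j) + int j)}"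

end

theory Submission
  imports Defs
begin


definition shape :: "(nat \<times> nat) set \<Rightarrow> bool" where
  "shape D \<longleftrightarrow> (\<forall>i j. (i, j) \<in> D \<longrightarrow> 1 \<le> i \<and> 1 \<le> j) \<and>
     (\<forall>i j i' j'. (i, j) \<in> D \<and> 1 \<le> i' \<and> i' \<le> i \<and> 1 \<le> j' \<and> j' \<le> j \<longrightarrow> (i', j') \<in> D)"

definition hs :: "(nat \<times> nat) set \<Rightarrow> (nat \<times> nat) set \<Rightarrow> bool" where
  "hs D E \<longleftrightarrow> D \<subseteq> E \<and> (\<forall>i j. (Suc i, j) \<in> E \<and> 1 \<le> i \<longrightarrow> (i, j) \<in> D)"

definition Sh :: "(nat \<times> nat) set \<Rightarrow> (nat \<times> nat) set set" where
  "Sh L = {D. D \<subseteq> L \<and> shape D}"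

definition step :: "((nat \<times> nat) \<Rightarrow> 'a::comm_ring_1) \<Rightarrow> (nat \<times> nat) set \<Rightarrow> (nat \<times> nat) set \<Rightarrow> 'a" where
  "step g D E = (if hs D E then \<Prod>a\<in>E - D. g a else 0)"

fun CP :: "(nat \<times> nat) set \<Rightarrow> ((nat \<times> nat) \<Rightarrow> 'a::comm_ring_1) list \<Rightarrow> (nat \<times> nat) set \<Rightarrow> (nat \<times> nat) set \<Rightarrow> 'a" where
  "CP L [] D E = (if D = E then 1 else 0)"
| "CP L (g # gs) D E = (\<Sum>F\<in>Sh L. step g D F * CP L gs F E)"

lemma finite_Sh: "finite L \<Longrightarrow> finite (Sh L)"
  unfolding Sh_def by (rule finite_subset[of _ "Pow L"]) auto

lemma empty_Sh: "{} \<in> Sh L"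
  unfolding Sh_def shape_def by auto

lemma CP_append:
  assumes "finite L" "D \<in> Sh L"
  shows "CP L (gs @ hs') D E = (\<Sum>F\<in>Sh L. CP L gs D F * CP L hs' F E)"
  using assms(2)
proof (induction gs arbitrary: D)
  case Nil
  have "(\<Sum>F\<in>Sh L. CP L [] D F * CP L hs' F E) = (\<Sum>F\<in>Sh L. if F = D then CP L hs' F E else 0)"
    by (rule sum.cong) auto
  also have "\<dots> = CP L hs' D E" using Nil finite_Sh[OF assms(1)] by (simp add: sum.delta')
  finally show ?case by simp
next
  case (Cons g gs)
  have "CP L ((g # gs) @ hs') D E = (\<Sum>F\<in>Sh L. step g D F * (\<Sum>G\<in>Sh L. CP L gs F G * CP L hs' G E))"
    using Cons.IH by simp
  also have "\<dots> = (\<Sum>F\<in>Sh L. \<Sum>G\<in>Sh L. step g D F * CP L gs F G * CP L hs' G E)"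
    by (simp add: sum_distrib_left mult.assoc)
  also have "\<dots> = (\<Sum>G\<in>Sh L. \<Sum>F\<in>Sh L. step g D F * CP L gs F G * CP L hs' G E)"
    by (rule sum.swap)
  also have "\<dots> = (\<Sum>G\<in>Sh L. CP L (g # gs) D G * CP L hs' G E)"
    by (simp add: sum_distrib_right)
  finally show ?case .
qed

lemma CP_single: "finite L \<Longrightarrow> E \<in> Sh L \<Longrightarrow> CP L [g] D E = step g D E"
  using finite_Sh[of L] by (simp add: sum.delta' if_distrib cong: if_cong)

lemma CP_pair: "finite L \<Longrightarrow> E \<in> Sh L \<Longrightarrow> CP L [g1, g2] D E = (\<Sum>F\<in>Sh L. step g1 D F * step g2 F E)"
  using CP_single[of L E g2] by simp

lemma CP_prefix:
  assumes "D \<in> Sh L" "\<And>F. F \<in> Sh L \<Longrightarrow> CP L l1 F E = CP L l2 F E"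
  shows "CP L (pre @ l1) D E = CP L (pre @ l2) D E"
  using assms(1)
proof (induction pre arbitrary: D)
  case Nil then show ?case using assms(2) by simp
next
  case (Cons g pre) then show ?case by (simp cong: sum.cong)
qed

lemma CP_replace:
  assumes "finite L" "D \<in> Sh L" "\<And>F G. F \<in> Sh L \<Longrightarrow> G \<in> Sh L \<Longrightarrow> CP L l1 F G = CP L l2 F G"
  shows "CP L (pre @ l1 @ post) D E = CP L (pre @ l2 @ post) D E"
proof (rule CP_prefix[OF assms(2)])
  fix F assume F: "F \<in> Sh L"
  show "CP L (l1 @ post) F E = CP L (l2 @ post) F E"
    unfolding CP_append[OF assms(1) F] using assms(3)[OF F] by (simp cong: sum.cong)
qed

lemma step_nz: "step g D F \<noteq> 0 \<Longrightarrow> D \<subseteq> F"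
  unfolding step_def hs_def by (auto split: if_splits)

lemma CP_nz: "CP L gs D E \<noteq> 0 \<Longrightarrow> D \<subseteq> E"
proof (induction gs arbitrary: D)
  case Nil then show ?case by (simp split: if_splits)
next
  case (Cons g gs)
  then obtain F where "step g D F * CP L gs F E \<noteq> 0"
    by (metis (no_types, lifting) CP.simps(2) sum.neutral)
  then show ?case using Cons.IH step_nz by (metis mult_not_zero subset_trans)
qed

lemma CP_agree:
  assumes "list_all2 (\<lambda>g g'. \<forall>a\<in>L. g a = g' a) gs gs'"
  shows "CP L gs D E = CP L gs' D E"
  using assms
proof (induction gs arbitrary: gs' D)
  case Nil then show ?case by simp
next
  case (Cons g gs)
  then obtain g' gs2 where gs': "gs' = g' # gs2" and gg: "\<forall>a\<in>L. g a = g' a"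
    and r: "list_all2 (\<lambda>g g'. \<forall>a\<in>L. g a = g' a) gs gs2"
    by (cases gs') auto
  have "step g D F = step g' D F" if "F \<in> Sh L" for F
    unfolding step_def using that gg by (auto simp: Sh_def intro!: prod.cong)
  then show ?case using Cons.IH[OF r] gs' by (auto intro!: sum.cong)
qed




definition SS :: "(nat \<times> nat) set \<Rightarrow> (nat \<times> nat) set \<Rightarrow> nat \<Rightarrow> ((nat \<times> nat) \<Rightarrow> nat) set" where
  "SS D E b = {T \<in> (E - D) \<rightarrow>\<^sub>E {1..b}.
     (\<forall>i j j'. (i, j) \<in> E - D \<and> (i, j') \<in> E - D \<and> j < j' \<longrightarrow> T (i, j) \<le> T (i, j')) \<and>
     (\<forall>i i' j. (i, j) \<in> E - D \<and> (i', j) \<in> E - D \<and> i < i' \<longrightarrow> T (i, j) < T (i', j))}"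

lemma finite_SS: "finite E \<Longrightarrow> finite (SS D E b)"
  unfolding SS_def by (rule finite_subset[of _ "(E - D) \<rightarrow>\<^sub>E {1..b}"]) (auto intro: finite_PiE)

definition lvl :: "(nat \<times> nat) set \<Rightarrow> (nat \<times> nat) set \<Rightarrow> nat \<Rightarrow> ((nat \<times> nat) \<Rightarrow> nat) \<Rightarrow> (nat \<times> nat) set" where
  "lvl D E b T = D \<union> {a \<in> E - D. T a \<le> b}"

definition ext :: "(nat \<times> nat) set \<Rightarrow> (nat \<times> nat) set \<Rightarrow> (nat \<times> nat) set \<Rightarrow> nat \<Rightarrow> ((nat \<times> nat) \<Rightarrow> nat) \<Rightarrow> ((nat \<times> nat) \<Rightarrow> nat)" where
  "ext D F E v T = (\<lambda>a. if a \<in> F - D then T a else if a \<in> E - F then v else undefined)"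

lemma shapeD: "shape D \<Longrightarrow> (i, j) \<in> D \<Longrightarrow> 1 \<le> i' \<Longrightarrow> i' \<le> i \<Longrightarrow> 1 \<le> j' \<Longrightarrow> j' \<le> j \<Longrightarrow> (i', j') \<in> D"
  unfolding shape_def by blast

lemma shape_pos: "shape D \<Longrightarrow> (i, j) \<in> D \<Longrightarrow> 1 \<le> i \<and> 1 \<le> j"
  unfolding shape_def by blast

lemma lvl_props:
  assumes D: "D \<in> Sh L" and E: "E \<in> Sh L" and DE: "D \<subseteq> E" and T: "T \<in> SS D E (Suc b)"
  shows "lvl D E b T \<in> Sh L" "D \<subseteq> lvl D E b T" "hs (lvl D E b T) E"
proof -
  have Esh: "shape E" "E \<subseteq> L" and Dsh: "shape D" "D \<subseteq> L" using D E by (auto simp: Sh_def)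
  have TT: "T \<in> (E - D) \<rightarrow>\<^sub>E {1..Suc b}"
   and row: "\<And>i j j'. (i, j) \<in> E - D \<Longrightarrow> (i, j') \<in> E - D \<Longrightarrow> j < j' \<Longrightarrow> T (i, j) \<le> T (i, j')"
   and col: "\<And>i i' j. (i, j) \<in> E - D \<Longrightarrow> (i', j) \<in> E - D \<Longrightarrow> i < i' \<Longrightarrow> T (i, j) < T (i', j)"
    using T unfolding SS_def by blast+
  have val: "\<And>a. a \<in> E - D \<Longrightarrow> T a \<le> Suc b" using TT by (auto simp: PiE_def Pi_def)
  show "D \<subseteq> lvl D E b T" by (auto simp: lvl_def)
  have sub: "lvl D E b T \<subseteq> L" using Esh Dsh by (auto simp: lvl_def)
  have "shape (lvl D E b T)"
    unfolding shape_def
  proof (rule conjI; intro allI impI)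
    fix i j assume "(i, j) \<in> lvl D E b T"
    then have "(i, j) \<in> E" using DE by (auto simp: lvl_def)
    then show "1 \<le> i \<and> 1 \<le> j" using shape_pos[OF Esh(1)] by blast
  next
    fix i j i' j' assume a: "(i, j) \<in> lvl D E b T \<and> 1 \<le> i' \<and> i' \<le> i \<and> 1 \<le> j' \<and> j' \<le> j"
    show "(i', j') \<in> lvl D E b T"
    proof (cases "(i, j) \<in> D")
      case True
      then have "(i', j') \<in> D" using shapeD[OF Dsh(1) True] a by blast
      then show ?thesis by (simp add: lvl_def)
    next
      case False
      then have ij: "(i, j) \<in> E - D" "T (i, j) \<le> b" using a by (auto simp: lvl_def)
      have E1: "(i', j') \<in> E" using shapeD[OF Esh(1), of i j i' j'] ij a by blast
      have jj: "1 \<le> j" using a by linarith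
      have E2: "(i', j) \<in> E" using shapeD[OF Esh(1), of i j i' j] ij a jj by blast
      show ?thesis
      proof (cases "(i', j') \<in> D")
        case True then show ?thesis by (simp add: lvl_def)
      next
        case False
        have nD: "(i', j) \<notin> D"
        proof
          assume "(i', j) \<in> D"
          then have "(i', j') \<in> D" using shapeD[OF Dsh(1), of i' j i' j'] a by blast
          then show False using False by simp
        qed
        have "T (i', j') \<le> T (i', j)"
        proof (cases "j' = j")
          case True then show ?thesis by simp
        next
          case False then show ?thesis using row[of i' j' j] \<open>(i', j') \<notin> D\<close> nD E1 E2 a by simp
        qed
        also have "\<dots> \<le> T (i, j)"
        proof (cases "i' = i")
          case True then show ?thesis by simp
        next
          case False then show ?thesis using col[of i' j i] nD E2 ij a by simp
        qed
        finally have "T (i', j') \<le> b" using ij by simp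
        then show ?thesis using False E1 by (simp add: lvl_def)
      qed
    qed
  qed
  then show "lvl D E b T \<in> Sh L" using sub by (simp add: Sh_def)
  show "hs (lvl D E b T) E"
    unfolding hs_def
  proof (intro conjI allI impI)
    show "lvl D E b T \<subseteq> E" using DE by (auto simp: lvl_def)
  next
    fix i j assume a: "(Suc i, j) \<in> E \<and> 1 \<le> i"
    have j1: "1 \<le> j" using shape_pos[OF Esh(1)] a by blast
    have iE: "(i, j) \<in> E" using shapeD[OF Esh(1), of "Suc i" j i j] a j1 by simp
    show "(i, j) \<in> lvl D E b T"
    proof (cases "(i, j) \<in> D")
      case True then show ?thesis by (simp add: lvl_def)
    next
      case False
      have SD: "(Suc i, j) \<notin> D"
      proof
        assume SD: "(Suc i, j) \<in> D"
        then have "(i, j) \<in> D" using shapeD[OF Dsh(1), of "Suc i" j i j] a j1 by simp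
        then show False using False by simp
      qed
      then have "T (i, j) < T (Suc i, j)" using col[of i j "Suc i"] False iE a by simp
      moreover have "T (Suc i, j) \<le> Suc b" using val[of "(Suc i, j)"] a SD by simp
      ultimately show ?thesis using False iE by (simp add: lvl_def)
    qed
  qed
qed

lemma chain_bij:
  assumes D: "D \<in> Sh L" and E: "E \<in> Sh L" and F: "F \<in> Sh L" and DF: "D \<subseteq> F" and FE: "hs F E"
  shows "bij_betw (ext D F E (Suc b)) (SS D F b) {T \<in> SS D E (Suc b). lvl D E b T = F}"
proof (rule bij_betw_byWitness[where f' = "\<lambda>T. restrict T (F - D)"])
  have Esh: "shape E" and Fsh: "shape F" using E F by (auto simp: Sh_def)
  have FsE: "F \<subseteq> E" using FE by (simp add: hs_def)
  show "\<forall>a\<in>SS D F b. restrict (ext D F E (Suc b) a) (F - D) = a"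
  proof
    fix T assume "T \<in> SS D F b"
    then have "T \<in> extensional (F - D)" unfolding SS_def by (simp add: PiE_def)
    then show "restrict (ext D F E (Suc b) T) (F - D) = T"
      unfolding ext_def restrict_def extensional_def by (auto simp: fun_eq_iff)
  qed
  show "\<forall>a'\<in>{T \<in> SS D E (Suc b). lvl D E b T = F}. ext D F E (Suc b) (restrict a' (F - D)) = a'"
  proof
    fix T assume T: "T \<in> {T \<in> SS D E (Suc b). lvl D E b T = F}"
    then have TE: "T \<in> (E - D) \<rightarrow>\<^sub>E {1..Suc b}" and lv: "lvl D E b T = F" by (auto simp: SS_def)
    show "ext D F E (Suc b) (restrict T (F - D)) = T"
    proof
      fix a
      show "ext D F E (Suc b) (restrict T (F - D)) a = T a"
      proof (cases "a \<in> F - D")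
        case True then show ?thesis by (simp add: ext_def)
      next
        case False
        show ?thesis
        proof (cases "a \<in> E - F")
          case True
          then have "a \<in> E - D" "\<not> T a \<le> b" using lv DF unfolding lvl_def by auto
          moreover have "T a \<le> Suc b" using PiE_mem[OF TE \<open>a \<in> E - D\<close>] by simp
          ultimately show ?thesis using True False by (simp add: ext_def)
        next
          case False2: False
          then have "a \<notin> E - D" using False FsE by auto
          then have "T a = undefined" using TE by (meson PiE_E)
          then show ?thesis using False False2 by (auto simp: ext_def)
        qed
      qed
    qed
  qed
  show "ext D F E (Suc b) ` SS D F b \<subseteq> {T \<in> SS D E (Suc b). lvl D E b T = F}"
  proof
    fix T' assume "T' \<in> ext D F E (Suc b) ` SS D F b"
    then obtain T where T: "T \<in> SS D F b" and T': "T' = ext D F E (Suc b) T" by auto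
    have TT: "T \<in> (F - D) \<rightarrow>\<^sub>E {1..b}"
     and row: "\<And>i j j'. (i, j) \<in> F - D \<Longrightarrow> (i, j') \<in> F - D \<Longrightarrow> j < j' \<Longrightarrow> T (i, j) \<le> T (i, j')"
     and col: "\<And>i i' j. (i, j) \<in> F - D \<Longrightarrow> (i', j) \<in> F - D \<Longrightarrow> i < i' \<Longrightarrow> T (i, j) < T (i', j)"
      using T unfolding SS_def by blast+
    have val: "\<And>a. a \<in> F - D \<Longrightarrow> 1 \<le> T a \<and> T a \<le> b" using TT by (auto simp: PiE_def Pi_def)
    have Frow: "(i, j) \<in> F" if "(i, j') \<in> F" "j < j'" "1 \<le> j" for i j j'
      using shapeD[OF Fsh that(1), of i j] shape_pos[OF Fsh that(1)] that by simp
    have Fcol: "(i, j) \<in> F" if c1: "(i', j) \<in> E" and c2: "i < i'" and c3: "1 \<le> i" for i i' j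
    proof -
      obtain k where k: "i' = Suc k" using c2 less_imp_Suc_add by blast
      have k1: "1 \<le> k" using c2 c3 k by simp
      have kF: "(k, j) \<in> F" using FE c1 k k1 unfolding hs_def by auto
      show ?thesis using shapeD[OF Fsh kF, of i j] shape_pos[OF Fsh kF] c2 c3 k by simp
    qed
    have Epos: "1 \<le> i \<and> 1 \<le> j" if "(i, j) \<in> E" for i j using shape_pos[OF Esh that] .
    have "T' \<in> SS D E (Suc b)"
      unfolding SS_def
    proof (intro CollectI conjI allI impI)
      show "T' \<in> (E - D) \<rightarrow>\<^sub>E {1..Suc b}"
      proof (rule PiE_I)
        fix a assume "a \<in> E - D"
        then show "T' a \<in> {1..Suc b}" using val[of a] unfolding T' ext_def by auto
      next
        fix a assume "a \<notin> E - D"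
        then show "T' a = undefined" using FsE DF unfolding T' ext_def by auto
      qed
    next
      fix i j j' assume a: "(i, j) \<in> E - D \<and> (i, j') \<in> E - D \<and> j < j'"
      show "T' (i, j) \<le> T' (i, j')"
      proof (cases "(i, j') \<in> F")
        case True
        then have "(i, j) \<in> F" using Frow[of i j' j] a Epos[of i j] by blast
        then show ?thesis using row[of i j j'] a True unfolding T' ext_def by auto
      next
        case False
        then show ?thesis using val[of "(i, j)"] a unfolding T' ext_def by auto
      qed
    next
      fix i i' j assume a: "(i, j) \<in> E - D \<and> (i', j) \<in> E - D \<and> i < i'"
      have iF: "(i, j) \<in> F" using Fcol[of i' j i] a Epos[of i j] by blast
      show "T' (i, j) < T' (i', j)"
      proof (cases "(i', j) \<in> F")
        case True
        then show ?thesis using col[of i j i'] a iF unfolding T' ext_def by auto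
      next
        case False
        then show ?thesis using val[of "(i, j)"] a iF unfolding T' ext_def by auto
      qed
    qed
    moreover have "lvl D E b T' = F"
    proof
      show "lvl D E b T' \<subseteq> F"
        unfolding lvl_def T' ext_def using DF by auto
      show "F \<subseteq> lvl D E b T'"
        unfolding lvl_def T' ext_def using val FsE by auto
    qed
    ultimately show "T' \<in> {T \<in> SS D E (Suc b). lvl D E b T = F}" by simp
  qed
  show "(\<lambda>T. restrict T (F - D)) ` {T \<in> SS D E (Suc b). lvl D E b T = F} \<subseteq> SS D F b"
  proof
    fix T' assume "T' \<in> (\<lambda>T. restrict T (F - D)) ` {T \<in> SS D E (Suc b). lvl D E b T = F}"
    then obtain T where T: "T \<in> SS D E (Suc b)" and lv: "lvl D E b T = F" and T': "T' = restrict T (F - D)" by auto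
    have TT: "T \<in> (E - D) \<rightarrow>\<^sub>E {1..Suc b}"
     and row: "\<And>i j j'. (i, j) \<in> E - D \<Longrightarrow> (i, j') \<in> E - D \<Longrightarrow> j < j' \<Longrightarrow> T (i, j) \<le> T (i, j')"
     and col: "\<And>i i' j. (i, j) \<in> E - D \<Longrightarrow> (i', j) \<in> E - D \<Longrightarrow> i < i' \<Longrightarrow> T (i, j) < T (i', j)"
      using T unfolding SS_def by blast+
    have v1: "\<And>a. a \<in> E - D \<Longrightarrow> 1 \<le> T a" using TT by (auto simp: PiE_def Pi_def)
    have v2: "\<And>a. a \<in> F - D \<Longrightarrow> T a \<le> b" using lv unfolding lvl_def by auto
    have FD: "F - D \<subseteq> E - D" using FsE by auto
    show "T' \<in> SS D F b"
      unfolding SS_def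
    proof (intro CollectI conjI allI impI)
      show "T' \<in> (F - D) \<rightarrow>\<^sub>E {1..b}" unfolding T' using v1 v2 FD by auto
    next
      fix i j j' assume a: "(i, j) \<in> F - D \<and> (i, j') \<in> F - D \<and> j < j'"
      then show "T' (i, j) \<le> T' (i, j')" using row[of i j j'] FD unfolding T' by auto
    next
      fix i i' j assume a: "(i, j) \<in> F - D \<and> (i', j) \<in> F - D \<and> i < i'"
      then show "T' (i, j) < T' (i', j)" using col[of i j i'] FD unfolding T' by auto
    qed
  qed
qed

lemma chain:
  assumes L: "finite L" and D: "D \<in> Sh L" and E: "E \<in> Sh L" and DE: "D \<subseteq> E"
  shows "(\<Sum>T\<in>SS D E b. \<Prod>a\<in>E - D. f (T a) a) = CP L (map f [1..<Suc b]) D E"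
  using E DE
proof (induction b arbitrary: E)
  case 0
  show ?case
  proof (cases "E = D")
    case True
    have "SS D E 0 = {\<lambda>_. undefined}" using True unfolding SS_def by auto
    then show ?thesis using True by simp
  next
    case False
    then have "E - D \<noteq> {}" using 0 by auto
    then have "SS D E 0 = {}" unfolding SS_def by (auto simp: PiE_def Pi_def)
    then show ?thesis using False by simp
  qed
next
  case (Suc b)
  have finE: "finite E" using Suc.prems L by (auto simp: Sh_def intro: finite_subset)
  have "CP L (map f [1..<Suc (Suc b)]) D E = CP L (map f [1..<Suc b] @ [f (Suc b)]) D E" by simp
  also have "\<dots> = (\<Sum>F\<in>Sh L. CP L (map f [1..<Suc b]) D F * step (f (Suc b)) F E)"
    unfolding CP_append[OF L D, of "map f [1..<Suc b]" "[f (Suc b)]" E]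
    by (simp only: CP_single[OF L Suc.prems(1)])
  also have "\<dots> = (\<Sum>F\<in>Sh L. if D \<subseteq> F \<and> hs F E then
        (\<Sum>T\<in>SS D F b. \<Prod>a\<in>F - D. f (T a) a) * (\<Prod>a\<in>E - F. f (Suc b) a) else 0)"
  proof (rule sum.cong)
    fix F assume F: "F \<in> Sh L"
    show "CP L (map f [1..<Suc b]) D F * step (f (Suc b)) F E = (if D \<subseteq> F \<and> hs F E then
        (\<Sum>T\<in>SS D F b. \<Prod>a\<in>F - D. f (T a) a) * (\<Prod>a\<in>E - F. f (Suc b) a) else 0)"
    proof (cases "D \<subseteq> F")
      case True
      then show ?thesis using Suc.IH[OF F True] unfolding step_def by (simp only: if_True if_False) simp
    next
      case False
      then have "CP L (map f [1..<Suc b]) D F = 0" using CP_nz by blast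
      then show ?thesis using False by simp
    qed
  qed simp
  also have "\<dots> = (\<Sum>F\<in>Sh L. \<Sum>T\<in>{T \<in> SS D E (Suc b). lvl D E b T = F}. \<Prod>a\<in>E - D. f (T a) a)"
  proof (rule sum.cong)
    fix F assume F: "F \<in> Sh L"
    show "(if D \<subseteq> F \<and> hs F E then (\<Sum>T\<in>SS D F b. \<Prod>a\<in>F - D. f (T a) a) * (\<Prod>a\<in>E - F. f (Suc b) a) else 0)
      = (\<Sum>T\<in>{T \<in> SS D E (Suc b). lvl D E b T = F}. \<Prod>a\<in>E - D. f (T a) a)"
    proof (cases "D \<subseteq> F \<and> hs F E")
      case True
      have FE: "F \<subseteq> E" using True by (simp add: hs_def)
      have "(\<Sum>T\<in>{T \<in> SS D E (Suc b). lvl D E b T = F}. \<Prod>a\<in>E - D. f (T a) a)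
          = (\<Sum>T\<in>SS D F b. \<Prod>a\<in>E - D. f (ext D F E (Suc b) T a) a)"
        using sum.reindex_bij_betw[OF chain_bij[OF D Suc.prems(1) F, of b] , symmetric] True by auto
      also have "\<dots> = (\<Sum>T\<in>SS D F b. (\<Prod>a\<in>F - D. f (T a) a) * (\<Prod>a\<in>E - F. f (Suc b) a))"
      proof (rule sum.cong)
        fix T assume "T \<in> SS D F b"
        have EU: "E - D = (F - D) \<union> (E - F)" using True FE by auto
        have "(\<Prod>a\<in>E - D. f (ext D F E (Suc b) T a) a)
           = (\<Prod>a\<in>F - D. f (ext D F E (Suc b) T a) a) * (\<Prod>a\<in>E - F. f (ext D F E (Suc b) T a) a)"
          unfolding EU by (rule prod.union_disjoint) (use finE FE in \<open>auto intro: finite_subset\<close>)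
        also have "\<dots> = (\<Prod>a\<in>F - D. f (T a) a) * (\<Prod>a\<in>E - F. f (Suc b) a)"
          unfolding ext_def by (auto intro!: arg_cong2[where f = "(*)"] prod.cong)
        finally show "(\<Prod>a\<in>E - D. f (ext D F E (Suc b) T a) a) = (\<Prod>a\<in>F - D. f (T a) a) * (\<Prod>a\<in>E - F. f (Suc b) a)" .
      qed simp
      finally show ?thesis using True by (simp add: sum_distrib_right)
    next
      case False
      have em: "{T \<in> SS D E (Suc b). lvl D E b T = F} = {}"
        using lvl_props[OF D Suc.prems(1) Suc.prems(2)] False by blast
      show ?thesis using False by (simp only: em if_False sum.empty)
    qed
  qed simp
  also have "\<dots> = (\<Sum>T\<in>SS D E (Suc b). \<Prod>a\<in>E - D. f (T a) a)"
    by (rule sum.group) (use finite_SS[OF finE] finite_Sh[OF L] lvl_props[OF D Suc.prems(1) Suc.prems(2)] in auto)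
  finally show ?case ..
qed




definition rl :: "(nat \<times> nat) set \<Rightarrow> nat \<Rightarrow> nat" where
  "rl D i = card {j. (i, j) \<in> D}"

definition sh :: "nat \<Rightarrow> (nat \<Rightarrow> nat) \<Rightarrow> (nat \<times> nat) set" where
  "sh R s = {(i, j). 1 \<le> i \<and> i \<le> R \<and> 1 \<le> j \<and> j \<le> s i}"

lemma memD:
  assumes L: "finite L" "\<forall>(i, j)\<in>L. i \<le> R" and D: "D \<in> Sh L"
  shows "(i, j) \<in> D \<longleftrightarrow> 1 \<le> i \<and> i \<le> R \<and> 1 \<le> j \<and> j \<le> rl D i"
proof -
  have Dsh: "shape D" "D \<subseteq> L" using D by (auto simp: Sh_def)
  define S where "S = {j. (i, j) \<in> D}"
  have finS: "finite S"
  proof -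
    have "S \<subseteq> snd ` L" unfolding S_def using Dsh(2) by force
    then show ?thesis using L(1) finite_subset by blast
  qed
  show ?thesis
  proof
    assume ij: "(i, j) \<in> D"
    have pos: "1 \<le> i" "1 \<le> j" using shape_pos[OF Dsh(1) ij] by auto
    have "(i, j) \<in> L" using ij Dsh(2) by blast
    then have "i \<le> R" using L(2) by blast
    moreover have "{1..j} \<subseteq> S"
    proof
      fix j' assume "j' \<in> {1..j}"
      then show "j' \<in> S" unfolding S_def using shapeD[OF Dsh(1) ij, of i j'] pos by simp
    qed
    then have "j \<le> card S" using card_mono[OF finS] by (metis card_atLeastAtMost diff_Suc_1)
    ultimately show "1 \<le> i \<and> i \<le> R \<and> 1 \<le> j \<and> j \<le> rl D i" using pos by (simp add: rl_def S_def)
  next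
    assume a: "1 \<le> i \<and> i \<le> R \<and> 1 \<le> j \<and> j \<le> rl D i"
    show "(i, j) \<in> D"
    proof (rule ccontr)
      assume nij: "(i, j) \<notin> D"
      have "S \<subseteq> {1..<j}"
      proof
        fix j' assume "j' \<in> S"
        then have j'D: "(i, j') \<in> D" by (simp add: S_def)
        have "1 \<le> j'" using shape_pos[OF Dsh(1) j'D] by simp
        moreover have "j' < j"
        proof (rule ccontr)
          assume "\<not> j' < j"
          then have "(i, j) \<in> D" using shapeD[OF Dsh(1) j'D, of i j] a by simp
          then show False using nij by simp
        qed
        ultimately show "j' \<in> {1..<j}" by simp
      qed
      then have "card S \<le> j - 1" using card_mono[of "{1..<j}" S] by simp
      then show False using a unfolding rl_def S_def by linarith
    qed
  qed
qed

lemma rl_pos: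
  assumes L: "finite L" "\<forall>(i, j)\<in>L. i \<le> R" and D: "D \<in> Sh L" and r: "1 \<le> rl D i"
  shows "(i, rl D i) \<in> D"
proof -
  have "{j. (i, j) \<in> D} \<noteq> {}" using r unfolding rl_def by (metis card.empty not_one_le_zero)
  then obtain j0 where j0: "(i, j0) \<in> D" by auto
  then have "1 \<le> i \<and> i \<le> R" using memD[OF L D] by blast
  then show ?thesis using memD[OF L D, of i "rl D i"] r by simp
qed

lemma rl_sh: "1 \<le> i \<Longrightarrow> i \<le> R \<Longrightarrow> rl (sh R s) i = s i"
proof -
  assume "1 \<le> i" "i \<le> R"
  then have "{j. (i, j) \<in> sh R s} = {1..s i}" unfolding sh_def by auto
  then show ?thesis unfolding rl_def by simp
qed

lemma dec_chain:
  assumes "\<And>k. 1 \<le> k \<Longrightarrow> Suc k \<le> R \<Longrightarrow> f (Suc k) \<le> f k" "1 \<le> i'" "i' \<le> i" "i \<le> R"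
  shows "f i \<le> (f i' :: nat)"
  using assms(3,4)
proof (induction i)
  case 0 then show ?case using assms(2) by simp
next
  case (Suc i)
  show ?case
  proof (cases "i' = Suc i")
    case True then show ?thesis by simp
  next
    case False
    then have "i' \<le> i" using Suc.prems by simp
    then have "f i \<le> f i'" using Suc by simp
    moreover have "f (Suc i) \<le> f i" using assms(1)[of i] Suc.prems \<open>i' \<le> i\<close> assms(2) by simp
    ultimately show ?thesis by simp
  qed
qed

lemma row_fact:
  fixes g1 g2 :: "nat \<times> nat \<Rightarrow> 'a::comm_ring_1"
  assumes L: "finite L" "\<forall>(i, j)\<in>L. i \<le> R" and D: "D \<in> Sh L" and E: "E \<in> Sh L"
  defines "A \<equiv> \<lambda>i. max (rl D i) (rl E (Suc i))"
    and "B \<equiv> \<lambda>i. if i = 1 then rl E 1 else min (rl E i) (rl D (i - 1))"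
  shows "(\<Sum>F\<in>Sh L. step g1 D F * step g2 F E) =
    (\<Prod>i\<in>{1..R}. \<Sum>t\<in>{A i..B i}. (\<Prod>j\<in>{rl D i<..t}. g1 (i, j)) * (\<Prod>j\<in>{t<..rl E i}. g2 (i, j)))"
proof -
  define d where "d = rl D"
  define e where "e = rl E"
  note mD = memD[OF L D, folded d_def]
  note mE = memD[OF L E, folded e_def]
  define V where "V = {F \<in> Sh L. hs D F \<and> hs F E}"
  define PI where "PI = PiE {1..R} (\<lambda>i. {A i..B i})"
  define w where "w = (\<lambda>F. (\<Prod>a\<in>F - D. g1 a) * (\<Prod>a\<in>E - F. g2 a))"
  have AB: "A i = max (d i) (e (Suc i))" "B i = (if i = 1 then e 1 else min (e i) (d (i - 1)))" for i
    unfolding A_def B_def d_def e_def by auto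
  have Be: "B i \<le> e i" for i unfolding AB by auto
  have eR: "e i = 0" if "R < i" for i
  proof (rule ccontr)
    assume "e i \<noteq> 0"
    then have "(i, e i) \<in> E" using rl_pos[OF L E, of i] unfolding e_def by simp
    then show False using mE that by simp
  qed
  have "(\<Sum>F\<in>Sh L. step g1 D F * step g2 F E) = (\<Sum>F\<in>Sh L. if F \<in> V then w F else 0)"
    unfolding step_def V_def w_def by (rule sum.cong) auto
  also have "\<dots> = (\<Sum>F\<in>V. w F)"
    unfolding V_def using sum.inter_filter[OF finite_Sh[OF L(1)], of w "\<lambda>F. hs D F \<and> hs F E"]
    by simp
  also have "\<dots> = (\<Sum>s\<in>PI. w (sh R s))"
  proof (rule sum.reindex_bij_betw[symmetric], rule bij_betw_imageI)
    show "inj_on (sh R) PI"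
    proof
      fix s s' assume s: "s \<in> PI" and s': "s' \<in> PI" and eq: "sh R s = sh R s'"
      show "s = s'"
      proof
        fix i show "s i = s' i"
        proof (cases "i \<in> {1..R}")
          case True then show ?thesis using rl_sh[of i R s] rl_sh[of i R s'] eq by simp
        next
          case False then show ?thesis using s s' unfolding PI_def by (simp add: PiE_def extensional_def)
        qed
      qed
    qed
    show "sh R ` PI = V"
    proof
      show "sh R ` PI \<subseteq> V"
      proof
        fix F assume "F \<in> sh R ` PI"
        then obtain s where s: "s \<in> PI" and F: "F = sh R s" by auto
        have sb: "A i \<le> s i \<and> s i \<le> B i" if "1 \<le> i" "i \<le> R" for i
          using s that unfolding PI_def by (auto simp: PiE_def Pi_def)
        have dec: "s (Suc k) \<le> s k" if "1 \<le> k" "Suc k \<le> R" for k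
        proof -
          have "s (Suc k) \<le> B (Suc k)" using sb[of "Suc k"] that by simp
          also have "\<dots> \<le> d k" unfolding AB using that by simp
          also have "\<dots> \<le> A k" unfolding AB by simp
          also have "\<dots> \<le> s k" using sb[of k] that by simp
          finally show ?thesis .
        qed
        have FE: "F \<subseteq> E"
        proof
          fix a assume "a \<in> F"
          then obtain i j where a: "a = (i, j)" "1 \<le> i" "i \<le> R" "1 \<le> j" "j \<le> s i"
            unfolding F sh_def by auto
          have "s i \<le> e i" using sb[of i] a Be[of i] by simp
          then show "a \<in> E" using mE a by simp
        qed
        have "shape F"
          unfolding shape_def F sh_def
        proof (intro conjI allI impI)
          fix i j i' j' assume "(i, j) \<in> {(i, j). 1 \<le> i \<and> i \<le> R \<and> 1 \<le> j \<and> j \<le> s i} \<and> 1 \<le> i' \<and> i' \<le> i \<and> 1 \<le> j' \<and> j' \<le> j"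
          then have a: "1 \<le> i" "i \<le> R" "1 \<le> j" "j \<le> s i" "1 \<le> i'" "i' \<le> i" "1 \<le> j'" "j' \<le> j" by auto
          have "s i \<le> s i'" using dec_chain[of R s i' i] dec a by blast
          then show "(i', j') \<in> {(i, j). 1 \<le> i \<and> i \<le> R \<and> 1 \<le> j \<and> j \<le> s i}" using a by simp
        qed auto
        then have "F \<in> Sh L" using FE E by (auto simp: Sh_def)
        moreover have "hs D F"
          unfolding hs_def
        proof (intro conjI allI impI subsetI)
          fix a assume "a \<in> D"
          then obtain i j where a: "a = (i, j)" "1 \<le> i" "i \<le> R" "1 \<le> j" "j \<le> d i"
            using mD by (cases a) blast
          then show "a \<in> F" using sb[of i] unfolding F sh_def AB by auto
        next
          fix i j assume a: "(Suc i, j) \<in> F \<and> 1 \<le> i"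
          then have "1 \<le> j" "j \<le> s (Suc i)" "Suc i \<le> R" unfolding F sh_def by auto
          moreover have "s (Suc i) \<le> d i" using sb[of "Suc i"] a \<open>Suc i \<le> R\<close> unfolding AB by simp
          ultimately show "(i, j) \<in> D" using mD a by simp
        qed
        moreover have "hs F E"
          unfolding hs_def
        proof (intro conjI allI impI)
          show "F \<subseteq> E" by (rule FE)
        next
          fix i j assume a: "(Suc i, j) \<in> E \<and> 1 \<le> i"
          then have "1 \<le> j" "j \<le> e (Suc i)" "Suc i \<le> R" using mE by auto
          moreover have "e (Suc i) \<le> s i" using sb[of i] a \<open>Suc i \<le> R\<close> unfolding AB by simp
          ultimately show "(i, j) \<in> F" unfolding F sh_def using a by simp
        qed
        ultimately show "F \<in> V" unfolding V_def by simp
      qed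
    next
      show "V \<subseteq> sh R ` PI"
      proof
        fix F assume "F \<in> V"
        then have F: "F \<in> Sh L" "hs D F" "hs F E" unfolding V_def by auto
        define f where "f = rl F"
        note mF = memD[OF L F(1), folded f_def]
        define s where "s = restrict f {1..R}"
        have DF: "D \<subseteq> F" and FE: "F \<subseteq> E" using F unfolding hs_def by auto
        have "s \<in> PI"
          unfolding PI_def s_def
        proof (rule restrict_PiE_iff[THEN iffD2], intro ballI)
          fix i assume i: "i \<in> {1..R}"
          have "d i \<le> f i"
          proof (cases "d i = 0")
            case False
            then have "(i, d i) \<in> D" using rl_pos[OF L D, of i] unfolding d_def by simp
            then show ?thesis using DF mF by blast
          qed simp
          moreover have "e (Suc i) \<le> f i"
          proof (cases "e (Suc i) = 0")
            case False
            then have "(Suc i, e (Suc i)) \<in> E" using rl_pos[OF L E, of "Suc i"] unfolding e_def by simp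
            then have "(i, e (Suc i)) \<in> F" using F(3) i unfolding hs_def by simp
            then show ?thesis using mF by blast
          qed simp
          moreover have "f i \<le> e i"
          proof (cases "f i = 0")
            case False
            then have "(i, f i) \<in> F" using rl_pos[OF L F(1), of i] unfolding f_def by simp
            then show ?thesis using FE mE by blast
          qed simp
          moreover have "f i \<le> d (i - 1)" if i1: "i \<noteq> 1"
          proof (cases "f i = 0")
            case False
            then have fF: "(i, f i) \<in> F" using rl_pos[OF L F(1), of i] unfolding f_def by simp
            obtain k where k: "i = Suc k" "1 \<le> k" using i i1 by (cases i) auto
            have "(k, f i) \<in> D" using F(2) fF k unfolding hs_def by blast
            then have "(i - 1, f i) \<in> D" using k by simp
            then show ?thesis using mD by blast
          qed simp
          ultimately show "f i \<in> {A i..B i}" unfolding AB by auto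
        qed
        moreover have "sh R s = F"
          unfolding sh_def s_def using mF by auto
        ultimately show "F \<in> sh R ` PI" by blast
      qed
    qed
  qed
  also have "\<dots> = (\<Sum>s\<in>PI. \<Prod>i\<in>{1..R}. (\<Prod>j\<in>{d i<..s i}. g1 (i, j)) * (\<Prod>j\<in>{s i<..e i}. g2 (i, j)))"
  proof (rule sum.cong)
    fix s assume s: "s \<in> PI"
    have sb: "A i \<le> s i \<and> s i \<le> B i" if "1 \<le> i" "i \<le> R" for i
      using s that unfolding PI_def by (auto simp: PiE_def Pi_def)
    have e1: "sh R s - D = (SIGMA i:{1..R}. {d i<..s i})"
      unfolding sh_def using mD by auto
    have e2: "E - sh R s = (SIGMA i:{1..R}. {s i<..e i})"
    proof
      show "E - sh R s \<subseteq> (SIGMA i:{1..R}. {s i<..e i})"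
        unfolding sh_def using mE by auto
      show "(SIGMA i:{1..R}. {s i<..e i}) \<subseteq> E - sh R s"
        unfolding sh_def using mE by auto
    qed
    show "w (sh R s) = (\<Prod>i\<in>{1..R}. (\<Prod>j\<in>{d i<..s i}. g1 (i, j)) * (\<Prod>j\<in>{s i<..e i}. g2 (i, j)))"
    proof -
      have p1: "prod g1 (SIGMA i:{1..R}. {d i<..s i}) = (\<Prod>i\<in>{1..R}. \<Prod>j\<in>{d i<..s i}. g1 (i, j))"
        by (subst prod.Sigma) auto
      have p2: "prod g2 (SIGMA i:{1..R}. {s i<..e i}) = (\<Prod>i\<in>{1..R}. \<Prod>j\<in>{s i<..e i}. g2 (i, j))"
        by (subst prod.Sigma) auto
      show ?thesis unfolding w_def e1 e2 prod.distrib p1 p2 ..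
    qed
  qed simp
  also have "\<dots> = (\<Prod>i\<in>{1..R}. \<Sum>t\<in>{A i..B i}. (\<Prod>j\<in>{d i<..t}. g1 (i, j)) * (\<Prod>j\<in>{t<..e i}. g2 (i, j)))"
    unfolding PI_def by (rule prod_sum_PiE[symmetric]) auto
  finally show ?thesis unfolding d_def e_def .
qed




lemma gtAtMost_Suc: "m \<le> n \<Longrightarrow> {m<..Suc n} = insert (Suc n) {m<..n}"
  by auto

lemma seg_aux:
  fixes g :: "nat \<Rightarrow> 'a::comm_ring_1"
  shows "(\<Sum>t\<in>{A..A+L}. (\<Prod>j\<in>{A<..t}. y + g j) * (\<Prod>j\<in>{t<..A+L}. g (Suc j)))
       = (\<Sum>t\<in>{A..A+L}. (\<Prod>j\<in>{A<..t}. g j) * (\<Prod>j\<in>{t<..A+L}. y + g (Suc j)))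
     \<and> (\<Prod>j\<in>{A<..Suc (A+L)}. y + g j) - (\<Prod>j\<in>{A<..Suc (A+L)}. g j)
       = y * (\<Sum>t\<in>{A..A+L}. (\<Prod>j\<in>{A<..t}. g j) * (\<Prod>j\<in>{t<..A+L}. y + g (Suc j)))"
proof (induction L)
  case 0
  have "{A<..Suc A} = {Suc A}" by auto
  then show ?case by simp
next
  case (Suc L)
  define M where "M = A + L"
  define S1 where "S1 = (\<Sum>t\<in>{A..M}. (\<Prod>j\<in>{A<..t}. y + g j) * (\<Prod>j\<in>{t<..M}. g (Suc j)))"
  define S2 where "S2 = (\<Sum>t\<in>{A..M}. (\<Prod>j\<in>{A<..t}. g j) * (\<Prod>j\<in>{t<..M}. y + g (Suc j)))"
  define Py where "Py = (\<Prod>j\<in>{A<..Suc M}. y + g j)"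
  define Pg where "Pg = (\<Prod>j\<in>{A<..Suc M}. g j)"
  have IH: "S1 = S2" "Py - Pg = y * S2" using Suc.IH unfolding S1_def S2_def Py_def Pg_def M_def by auto
  have AM: "A \<le> Suc M" "A \<le> M" unfolding M_def by auto
  have e0: "{Suc M<..Suc M} = {}" by auto
  have r1: "(\<Sum>t\<in>{A..Suc M}. (\<Prod>j\<in>{A<..t}. y + g j) * (\<Prod>j\<in>{t<..Suc M}. g (Suc j)))
      = S1 * g (Suc (Suc M)) + Py"
  proof -
    have "(\<Sum>t\<in>{A..Suc M}. (\<Prod>j\<in>{A<..t}. y + g j) * (\<Prod>j\<in>{t<..Suc M}. g (Suc j)))
      = Py + (\<Sum>t\<in>{A..M}. (\<Prod>j\<in>{A<..t}. y + g j) * (\<Prod>j\<in>{t<..Suc M}. g (Suc j)))"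
      unfolding atLeastAtMostSuc_conv[OF AM(1)] Py_def by (simp add: e0)
    also have "(\<Sum>t\<in>{A..M}. (\<Prod>j\<in>{A<..t}. y + g j) * (\<Prod>j\<in>{t<..Suc M}. g (Suc j)))
       = (\<Sum>t\<in>{A..M}. (\<Prod>j\<in>{A<..t}. y + g j) * (\<Prod>j\<in>{t<..M}. g (Suc j)) * g (Suc (Suc M)))"
      by (rule sum.cong) (auto simp: gtAtMost_Suc mult.commute mult.left_commute)
    finally show ?thesis unfolding S1_def by (simp add: sum_distrib_right add.commute)
  qed
  have r2: "(\<Sum>t\<in>{A..Suc M}. (\<Prod>j\<in>{A<..t}. g j) * (\<Prod>j\<in>{t<..Suc M}. y + g (Suc j)))
      = S2 * (y + g (Suc (Suc M))) + Pg"
  proof -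
    have "(\<Sum>t\<in>{A..Suc M}. (\<Prod>j\<in>{A<..t}. g j) * (\<Prod>j\<in>{t<..Suc M}. y + g (Suc j)))
      = Pg + (\<Sum>t\<in>{A..M}. (\<Prod>j\<in>{A<..t}. g j) * (\<Prod>j\<in>{t<..Suc M}. y + g (Suc j)))"
      unfolding atLeastAtMostSuc_conv[OF AM(1)] Pg_def by (simp add: e0)
    also have "(\<Sum>t\<in>{A..M}. (\<Prod>j\<in>{A<..t}. g j) * (\<Prod>j\<in>{t<..Suc M}. y + g (Suc j)))
       = (\<Sum>t\<in>{A..M}. (\<Prod>j\<in>{A<..t}. g j) * (\<Prod>j\<in>{t<..M}. y + g (Suc j)) * (y + g (Suc (Suc M))))"
      by (rule sum.cong) (auto simp: gtAtMost_Suc mult.commute mult.left_commute)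
    finally show ?thesis unfolding S2_def by (simp add: sum_distrib_right add.commute)
  qed
  have r3: "(\<Prod>j\<in>{A<..Suc (Suc M)}. y + g j) = Py * (y + g (Suc (Suc M)))"
    unfolding Py_def using AM by (simp add: gtAtMost_Suc mult.commute)
  have r4: "(\<Prod>j\<in>{A<..Suc (Suc M)}. g j) = Pg * g (Suc (Suc M))"
    unfolding Pg_def using AM by (simp add: gtAtMost_Suc mult.commute)
  have eq: "A + Suc L = Suc M" unfolding M_def by simp
  have Py: "Py = Pg + y * S2" using IH(2) by (simp add: algebra_simps)
  have c1: "S1 * g (Suc (Suc M)) + Py = S2 * (y + g (Suc (Suc M))) + Pg"
    unfolding Py IH(1) by (simp add: algebra_simps)
  have c2: "Py * (y + g (Suc (Suc M))) - Pg * g (Suc (Suc M)) = y * (S2 * (y + g (Suc (Suc M))) + Pg)"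
    unfolding Py IH(1) by (simp add: algebra_simps)
  show ?case unfolding eq r1 r2 r3 r4 using c1 c2 by simp
qed

lemma seg:
  fixes g :: "nat \<Rightarrow> 'a::comm_ring_1"
  assumes "A \<le> B"
  shows "(\<Sum>t\<in>{A..B}. (\<Prod>j\<in>{A<..t}. y + g j) * (\<Prod>j\<in>{t<..B}. g (Suc j)))
       = (\<Sum>t\<in>{A..B}. (\<Prod>j\<in>{A<..t}. g j) * (\<Prod>j\<in>{t<..B}. y + g (Suc j)))"
  using seg_aux[where A=A and L="B - A" and y=y and g=g] assms by simp

lemma prod_split_ivl:
  fixes f :: "nat \<Rightarrow> 'a::comm_monoid_mult"
  assumes "a \<le> b" "b \<le> c"
  shows "prod f {a<..c} = prod f {a<..b} * prod f {b<..c}"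
proof -
  have "{a<..c} = {a<..b} \<union> {b<..c}" using assms by auto
  then show ?thesis by (simp add: prod.union_disjoint ivl_disj_int)
qed

lemma shiftprod:
  fixes p q :: "nat \<Rightarrow> 'a::comm_ring_1"
  assumes "\<And>i. 1 \<le> i \<Longrightarrow> p i = q (Suc i)" "q 1 = 1"
  shows "(\<Prod>i\<in>{1..Suc R}. q i) = (\<Prod>i\<in>{1..R}. p i)"
proof (induction R)
  case 0 then show ?case using assms(2) by simp
next
  case (Suc R)
  have "(\<Prod>i\<in>{1..Suc (Suc R)}. q i) = (\<Prod>i\<in>{1..Suc R}. q i) * q (Suc (Suc R))"
    by (simp add: atLeastAtMostSuc_conv mult.commute)
  also have "\<dots> = (\<Prod>i\<in>{1..R}. p i) * p (Suc R)" using Suc assms(1)[of "Suc R"] by simp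
  also have "\<dots> = (\<Prod>i\<in>{1..Suc R}. p i)" by (simp add: atLeastAtMostSuc_conv mult.commute)
  finally show ?case .
qed

lemma shiftprod2:
  fixes p q :: "nat \<Rightarrow> 'a::comm_ring_1"
  assumes "\<And>i. 1 \<le> i \<Longrightarrow> p i = q (Suc i)" "q 1 = 1" "p R = 1"
  shows "(\<Prod>i\<in>{1..R}. q i) = (\<Prod>i\<in>{1..R}. p i)"
proof (cases R)
  case 0 then show ?thesis by simp
next
  case (Suc R')
  then show ?thesis using shiftprod[OF assms(1,2), of R'] assms(3)
    by (simp add: atLeastAtMostSuc_conv)
qed

lemma rows_eq:
  fixes H :: "int \<Rightarrow> 'a::comm_ring_1" and d e :: "nat \<Rightarrow> nat"
  assumes eR: "e (Suc R) = 0"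
  defines "A \<equiv> \<lambda>i. max (d i) (e (Suc i))"
    and "B \<equiv> \<lambda>i. if i = 1 then e 1 else min (e i) (d (i - 1))"
  shows "(\<Prod>i\<in>{1..R}. \<Sum>t\<in>{A i..B i}. (\<Prod>j\<in>{d i<..t}. y + H (int j - int i)) * (\<Prod>j\<in>{t<..e i}. H (int j - int i + 1)))
       = (\<Prod>i\<in>{1..R}. \<Sum>t\<in>{A i..B i}. (\<Prod>j\<in>{d i<..t}. H (int j - int i)) * (\<Prod>j\<in>{t<..e i}. y + H (int j - int i + 1)))"
proof (cases "\<exists>i\<in>{1..R}. B i < A i")
  case True
  then obtain i where i: "i \<in> {1..R}" "B i < A i" by auto
  then have em: "{A i..B i} = {}" by auto
  have z: "(\<Prod>i\<in>{1..R}. \<Sum>t\<in>{A i..B i}. f i t) = 0" for f :: "nat \<Rightarrow> nat \<Rightarrow> 'a"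
    by (rule prod_zero) (use i em in \<open>auto intro!: bexI[of _ i]\<close>)
  show ?thesis by (simp only: z)
next
  case False
  then have AB: "A i \<le> B i" if "i \<in> {1..R}" for i using that by force
  have dA: "d i \<le> A i" for i unfolding A_def by simp
  have Be: "B i \<le> e i" for i unfolding B_def by simp
  define P where "P i = (\<Prod>j\<in>{d i<..A i}. y + H (int j - int i))" for i
  define P' where "P' i = (\<Prod>j\<in>{d i<..A i}. H (int j - int i))" for i
  define Q where "Q i = (\<Prod>j\<in>{B i<..e i}. H (int j - int i + 1))" for i
  define Q' where "Q' i = (\<Prod>j\<in>{B i<..e i}. y + H (int j - int i + 1))" for i
  define G where "G i = (\<Sum>t\<in>{A i..B i}. (\<Prod>j\<in>{A i<..t}. y + H (int j - int i)) * (\<Prod>j\<in>{t<..B i}. H (int j - int i + 1)))" for i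
  define G' where "G' i = (\<Sum>t\<in>{A i..B i}. (\<Prod>j\<in>{A i<..t}. H (int j - int i)) * (\<Prod>j\<in>{t<..B i}. y + H (int j - int i + 1)))" for i
  have GG: "G i = G' i" if "i \<in> {1..R}" for i
  proof -
    have h: "H (int (Suc j) - int i) = H (int j - int i + 1)" for j
      by (simp add: algebra_simps)
    show ?thesis
      unfolding G_def G'_def using seg[OF AB[OF that], of y "\<lambda>j. H (int j - int i)"]
      by (simp only: h)
  qed
  have L1: "(\<Sum>t\<in>{A i..B i}. (\<Prod>j\<in>{d i<..t}. y + H (int j - int i)) * (\<Prod>j\<in>{t<..e i}. H (int j - int i + 1)))
      = P i * G i * Q i" if "i \<in> {1..R}" for i
    unfolding P_def G_def Q_def sum_distrib_left sum_distrib_right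
  proof (rule sum.cong)
    fix t assume t: "t \<in> {A i..B i}"
    have s1: "(\<Prod>j\<in>{d i<..t}. y + H (int j - int i)) = (\<Prod>j\<in>{d i<..A i}. y + H (int j - int i)) * (\<Prod>j\<in>{A i<..t}. y + H (int j - int i))"
      by (rule prod_split_ivl) (use dA[of i] t in auto)
    have s2: "(\<Prod>j\<in>{t<..e i}. H (int j - int i + 1)) = (\<Prod>j\<in>{t<..B i}. H (int j - int i + 1)) * (\<Prod>j\<in>{B i<..e i}. H (int j - int i + 1))"
      by (rule prod_split_ivl) (use Be[of i] t in auto)
    show "(\<Prod>j\<in>{d i<..t}. y + H (int j - int i)) * (\<Prod>j\<in>{t<..e i}. H (int j - int i + 1)) =
      (\<Prod>j\<in>{d i<..A i}. y + H (int j - int i)) * ((\<Prod>j\<in>{A i<..t}. y + H (int j - int i)) * (\<Prod>j\<in>{t<..B i}. H (int j - int i + 1))) *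
      (\<Prod>j\<in>{B i<..e i}. H (int j - int i + 1))"
      unfolding s1 s2 by (simp only: mult.assoc)
  qed simp
  have L2: "(\<Sum>t\<in>{A i..B i}. (\<Prod>j\<in>{d i<..t}. H (int j - int i)) * (\<Prod>j\<in>{t<..e i}. y + H (int j - int i + 1)))
      = P' i * G' i * Q' i" if "i \<in> {1..R}" for i
    unfolding P'_def G'_def Q'_def sum_distrib_left sum_distrib_right
  proof (rule sum.cong)
    fix t assume t: "t \<in> {A i..B i}"
    have s1: "(\<Prod>j\<in>{d i<..t}. H (int j - int i)) = (\<Prod>j\<in>{d i<..A i}. H (int j - int i)) * (\<Prod>j\<in>{A i<..t}. H (int j - int i))"
      by (rule prod_split_ivl) (use dA[of i] t in auto)
    have s2: "(\<Prod>j\<in>{t<..e i}. y + H (int j - int i + 1)) = (\<Prod>j\<in>{t<..B i}. y + H (int j - int i + 1)) * (\<Prod>j\<in>{B i<..e i}. y + H (int j - int i + 1))"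
      by (rule prod_split_ivl) (use Be[of i] t in auto)
    show "(\<Prod>j\<in>{d i<..t}. H (int j - int i)) * (\<Prod>j\<in>{t<..e i}. y + H (int j - int i + 1)) =
      (\<Prod>j\<in>{d i<..A i}. H (int j - int i)) * ((\<Prod>j\<in>{A i<..t}. H (int j - int i)) * (\<Prod>j\<in>{t<..B i}. y + H (int j - int i + 1))) *
      (\<Prod>j\<in>{B i<..e i}. y + H (int j - int i + 1))"
      unfolding s1 s2 by (simp only: mult.assoc)
  qed simp
  have int1: "{d i<..A i} = {B (Suc i)<..e (Suc i)}" if "1 \<le> i" for i
    unfolding A_def B_def using that by auto
  have s1: "(\<Prod>i\<in>{1..R}. Q' i) = (\<Prod>i\<in>{1..R}. P i)"
  proof (rule shiftprod2)
    show "P i = Q' (Suc i)" if "1 \<le> i" for i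
      unfolding P_def Q'_def int1[OF that] by (rule prod.cong) (auto simp: algebra_simps)
    show "Q' 1 = 1" unfolding Q'_def B_def by simp
    show "P R = 1" unfolding P_def A_def using eR by simp
  qed
  have s2: "(\<Prod>i\<in>{1..R}. Q i) = (\<Prod>i\<in>{1..R}. P' i)"
  proof (rule shiftprod2)
    show "P' i = Q (Suc i)" if "1 \<le> i" for i
      unfolding P'_def Q_def int1[OF that] by (rule prod.cong) (auto simp: algebra_simps)
    show "Q 1 = 1" unfolding Q_def B_def by simp
    show "P' R = 1" unfolding P'_def A_def using eR by simp
  qed
  have "(\<Prod>i\<in>{1..R}. \<Sum>t\<in>{A i..B i}. (\<Prod>j\<in>{d i<..t}. y + H (int j - int i)) * (\<Prod>j\<in>{t<..e i}. H (int j - int i + 1)))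
      = (\<Prod>i\<in>{1..R}. P i * G i * Q i)"
    by (rule prod.cong) (simp_all only: L1)
  also have "\<dots> = (\<Prod>i\<in>{1..R}. P i) * (\<Prod>i\<in>{1..R}. G i) * (\<Prod>i\<in>{1..R}. Q i)"
    by (simp only: prod.distrib)
  also have "(\<Prod>i\<in>{1..R}. G i) = (\<Prod>i\<in>{1..R}. G' i)"
    by (rule prod.cong) (simp_all only: GG)
  also have "(\<Prod>i\<in>{1..R}. P i) * (\<Prod>i\<in>{1..R}. G' i) * (\<Prod>i\<in>{1..R}. Q i)
      = (\<Prod>i\<in>{1..R}. P' i) * (\<Prod>i\<in>{1..R}. G' i) * (\<Prod>i\<in>{1..R}. Q' i)"
    unfolding s1[symmetric] s2 by (simp only: ac_simps)
  also have "\<dots> = (\<Prod>i\<in>{1..R}. P' i * G' i * Q' i)"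
    by (simp only: prod.distrib)
  also have "\<dots> = (\<Prod>i\<in>{1..R}. \<Sum>t\<in>{A i..B i}. (\<Prod>j\<in>{d i<..t}. H (int j - int i)) * (\<Prod>j\<in>{t<..e i}. y + H (int j - int i + 1)))"
    by (rule prod.cong) (simp_all only: L2)
  finally show ?thesis .
qed




lemma commute:
  fixes H :: "int \<Rightarrow> 'a::comm_ring_1"
  assumes L: "finite L" "\<forall>(i, j)\<in>L. i \<le> R" and D: "D \<in> Sh L" and E: "E \<in> Sh L"
  shows "(\<Sum>F\<in>Sh L. step (\<lambda>a. y + H (content a)) D F * step (\<lambda>a. H (content a + 1)) F E)
       = (\<Sum>F\<in>Sh L. step (\<lambda>a. H (content a)) D F * step (\<lambda>a. y + H (content a + 1)) F E)"
proof -
  have eR: "rl E (Suc R) = 0"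
  proof (rule ccontr)
    assume "rl E (Suc R) \<noteq> 0"
    then have "(Suc R, rl E (Suc R)) \<in> E" using rl_pos[OF L E] by simp
    then show False using memD[OF L E] by simp
  qed
  show ?thesis
    unfolding row_fact[OF L D E]
    using rows_eq[where d="rl D" and e="rl E" and R=R and y=y and H=H, OF eR]
    by (simp add: content_def)
qed

definition Wfun :: "(nat \<Rightarrow> 'a::comm_ring_1) \<Rightarrow> int \<Rightarrow> 'a" where
  "Wfun u z = (if 1 \<le> z then - u (nat z) else 0)"

definition Wf :: "(nat \<Rightarrow> 'a::comm_ring_1) \<Rightarrow> nat \<Rightarrow> int \<Rightarrow> nat \<times> nat \<Rightarrow> 'a" where
  "Wf u N q = (\<lambda>a. Wfun u (q - int N + content a))"

definition Yf :: "(nat \<Rightarrow> 'a::comm_ring_1) \<Rightarrow> nat \<Rightarrow> 'a \<Rightarrow> int \<Rightarrow> nat \<times> nat \<Rightarrow> 'a" where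
  "Yf u N y q = (\<lambda>a. y + Wfun u (q - int N + content a))"

definition Ws :: "(nat \<Rightarrow> 'a::comm_ring_1) \<Rightarrow> nat \<Rightarrow> int \<Rightarrow> nat \<Rightarrow> (nat \<times> nat \<Rightarrow> 'a) list" where
  "Ws u N q K = map (\<lambda>k. Wf u N (q + int k)) [0..<K]"

fun Ys :: "(nat \<Rightarrow> 'a::comm_ring_1) \<Rightarrow> nat \<Rightarrow> 'a list \<Rightarrow> int \<Rightarrow> (nat \<times> nat \<Rightarrow> 'a) list" where
  "Ys u N [] q = []"
| "Ys u N (y # ys) q = Yf u N y q # Ys u N ys (q + 1)"

lemma Ws_Suc: "Ws u N q (Suc K) = Wf u N q # Ws u N (q + 1) K"
  unfolding Ws_def by (simp add: upt_conv_Cons map_Suc_upt[symmetric] del: upt_Suc) (simp add: algebra_simps)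

lemma Ws_0: "Ws u N q 0 = []" by (simp add: Ws_def)

lemma pair_commute:
  assumes L: "finite L" "\<forall>(i, j)\<in>L. i \<le> R" and D: "D \<in> Sh L" and E: "E \<in> Sh L"
  shows "CP L [Yf u N y q, Wf u N (q + 1)] D E = CP L [Wf u N q, Yf u N y (q + 1)] D E"
proof -
  have h: "(\<lambda>a. Wfun u (q + 1 - int N + content a)) = (\<lambda>a. Wfun u (q - int N + (content a + 1)))"
    by (simp add: algebra_simps)
  have h': "(\<lambda>a. y + Wfun u (q + 1 - int N + content a)) = (\<lambda>a. y + Wfun u (q - int N + (content a + 1)))"
    by (simp add: algebra_simps)
  show ?thesis
    unfolding CP_pair[OF L(1) E] Yf_def Wf_def h h'
    using commute[OF L D E, of y "\<lambda>z. Wfun u (q - int N + z)"] by simp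
qed

lemma move1:
  assumes L: "finite L" "\<forall>(i, j)\<in>L. i \<le> R" and D: "D \<in> Sh L"
  shows "CP L (Yf u N y q # Ws u N (q + 1) K @ post) D E = CP L (Ws u N q K @ Yf u N y (q + int K) # post) D E"
  using D
proof (induction K arbitrary: q D)
  case 0 then show ?case by (simp add: Ws_0)
next
  case (Suc K)
  have "CP L (Yf u N y q # Ws u N (q + 1) (Suc K) @ post) D E
      = CP L ([] @ [Yf u N y q, Wf u N (q + 1)] @ (Ws u N (q + 2) K @ post)) D E"
    by (simp add: Ws_Suc algebra_simps)
  also have "\<dots> = CP L ([] @ [Wf u N q, Yf u N y (q + 1)] @ (Ws u N (q + 2) K @ post)) D E"
    by (rule CP_replace[OF L(1) Suc.prems]) (rule pair_commute[OF L])
  also have "\<dots> = CP L ([Wf u N q] @ (Yf u N y (q + 1) # Ws u N (q + 1 + 1) K @ post)) D E"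
    by (simp add: algebra_simps)
  also have "\<dots> = CP L ([Wf u N q] @ (Ws u N (q + 1) K @ Yf u N y (q + 1 + int K) # post)) D E"
    by (rule CP_prefix[OF Suc.prems]) (rule Suc.IH)
  also have "\<dots> = CP L (Ws u N q (Suc K) @ Yf u N y (q + int (Suc K)) # post) D E"
    by (simp add: Ws_Suc algebra_simps)
  finally show ?case .
qed

lemma move_all:
  assumes L: "finite L" "\<forall>(i, j)\<in>L. i \<le> R" and D: "D \<in> Sh L"
  shows "CP L (Ys u N ys q @ Ws u N (q + int (length ys)) K @ post) D E = CP L (Ws u N q K @ Ys u N ys (q + int K) @ post) D E"
  using D
proof (induction ys arbitrary: q D)
  case Nil then show ?case by simp
next
  case (Cons y ys)
  have "CP L (Ys u N (y # ys) q @ Ws u N (q + int (length (y # ys))) K @ post) D E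
      = CP L ([Yf u N y q] @ (Ys u N ys (q + 1) @ Ws u N (q + 1 + int (length ys)) K @ post)) D E"
    by (simp add: algebra_simps)
  also have "\<dots> = CP L ([Yf u N y q] @ (Ws u N (q + 1) K @ Ys u N ys (q + 1 + int K) @ post)) D E"
    by (rule CP_prefix[OF Cons.prems]) (rule Cons.IH)
  also have "\<dots> = CP L (Yf u N y q # Ws u N (q + 1) K @ (Ys u N ys (q + 1 + int K) @ post)) D E"
    by simp
  also have "\<dots> = CP L (Ws u N q K @ Yf u N y (q + int K) # (Ys u N ys (q + 1 + int K) @ post)) D E"
    by (rule move1[OF L Cons.prems])
  also have "\<dots> = CP L (Ws u N q K @ Ys u N (y # ys) (q + int K) @ post) D E"
    by (simp add: algebra_simps)
  finally show ?case .
qed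

lemma step_Wf_empty:
  assumes LL: "finite L" and F: "F \<in> Sh L" and q: "q \<le> int N"
  shows "step (Wf u N q) {} F = (if F = {} then 1 else 0)"
proof (cases "F = {}")
  case True then show ?thesis by (simp add: step_def hs_def)
next
  case False
  have Fsh: "shape F" "F \<subseteq> L" using F by (auto simp: Sh_def)
  obtain i j where ij: "(i, j) \<in> F" using False by auto
  have "1 \<le> i \<and> 1 \<le> j" using shape_pos[OF Fsh(1) ij] .
  then have "(1, 1) \<in> F" using shapeD[OF Fsh(1) ij, of 1 1] by simp
  moreover have "Wf u N q (1, 1) = 0" using q by (simp add: Wf_def Wfun_def content_def)
  moreover have "finite F" using Fsh(2) LL finite_subset by blast
  ultimately have "(\<Prod>a\<in>F - {}. Wf u N q a) = 0" by (metis Diff_empty prod_zero)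
  then show ?thesis using False by (simp add: step_def)
qed




lemma boxes_mem: "(i, j) \<in> boxes lam \<longleftrightarrow> 1 \<le> i \<and> i \<le> length lam \<and> 1 \<le> j \<and> j \<le> lam ! (i - 1)"
  unfolding boxes_def by simp

lemma boxes_N: "(i, j) \<in> boxes lam \<Longrightarrow> j \<le> sum_list lam"
proof -
  assume a: "(i, j) \<in> boxes lam"
  then have "i - 1 < length lam" "j \<le> lam ! (i - 1)" unfolding boxes_mem by auto
  then show ?thesis using elem_le_sum_list[of "i - 1" lam] by simp
qed

lemma boxes_R: "\<forall>(i, j)\<in>boxes lam. i \<le> length lam"
  unfolding boxes_def by auto

lemma boxes_fin: "finite (boxes lam)"
proof -
  have "boxes lam \<subseteq> {1..length lam} \<times> {1..sum_list lam}"
    using boxes_N by (auto simp: boxes_mem)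
  then show ?thesis using finite_subset by blast
qed

lemma boxes_shape:
  assumes "is_partition lam"
  shows "shape (boxes lam)"
  unfolding shape_def
proof (rule conjI; intro allI impI)
  fix i j assume "(i, j) \<in> boxes lam" then show "1 \<le> i \<and> 1 \<le> j" by (simp add: boxes_mem)
next
  fix i j i' j' assume a: "(i, j) \<in> boxes lam \<and> 1 \<le> i' \<and> i' \<le> i \<and> 1 \<le> j' \<and> j' \<le> j"
  have s: "sorted (rev lam)" using assms by (simp add: is_partition_def)
  have a2: "i' - 1 \<le> i - 1" "i - 1 < length lam" using a by (auto simp: boxes_mem)
  have "lam ! (i - 1) \<le> lam ! (i' - 1)"
    using sorted_rev_nth_mono[OF s a2] .
  then show "(i', j') \<in> boxes lam" using a by (simp add: boxes_mem)
qed

lemma boxes_Sh: "is_partition lam \<Longrightarrow> boxes lam \<in> Sh (boxes lam)"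
  using boxes_shape by (simp add: Sh_def)

lemma down_closed_ivl:
  assumes "finite S" "\<forall>x\<in>S. (1::nat) \<le> x" "\<forall>x\<in>S. \<forall>y. 1 \<le> y \<and> y \<le> x \<longrightarrow> y \<in> S"
  shows "S = {1..card S}"
proof (cases "S = {}")
  case True then show ?thesis by simp
next
  case False
  define m where "m = Max S"
  have mS: "m \<in> S" unfolding m_def using Max_in[OF assms(1) False] .
  have "S = {1..m}"
  proof
    show "S \<subseteq> {1..m}" using assms(2) Max_ge[OF assms(1)] unfolding m_def by auto
    show "{1..m} \<subseteq> S" using assms(3) mS by auto
  qed
  then show ?thesis by simp
qed

lemma col_len_props:
  assumes P: "is_partition lam" and ij: "(i, j) \<in> boxes lam"
  shows "i \<le> col_len lam j" "(col_len lam j, j) \<in> boxes lam"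
proof -
  define S where "S = {i. (i, j) \<in> boxes lam}"
  have fin: "finite S"
  proof -
    have "S \<subseteq> fst ` boxes lam" unfolding S_def by force
    then show ?thesis using boxes_fin finite_subset by blast
  qed
  have Sdc: "S = {1..card S}"
  proof (rule down_closed_ivl[OF fin])
    show "\<forall>x\<in>S. 1 \<le> x" unfolding S_def by (simp add: boxes_mem)
    show "\<forall>x\<in>S. \<forall>y. 1 \<le> y \<and> y \<le> x \<longrightarrow> y \<in> S"
    proof (intro ballI allI impI)
      fix x y assume "x \<in> S" "1 \<le> y \<and> y \<le> x"
      then show "y \<in> S" unfolding S_def using shapeD[OF boxes_shape[OF P], of x j y j]
        by (auto simp: boxes_mem)
    qed
  qed
  have cl: "col_len lam j = card S" unfolding col_len_def S_def ..
  have "i \<in> S" using ij by (simp add: S_def)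
  then show "i \<le> col_len lam j" using Sdc cl by (metis atLeastAtMost_iff)
  have "card S \<in> S" using \<open>i \<in> S\<close> Sdc by (metis atLeastAtMost_iff empty_iff le_trans order_refl)
  then show "(col_len lam j, j) \<in> boxes lam" using cl by (simp add: S_def)
qed

lemma SS_col_chain:
  assumes D: "shape D" and E: "shape E" and T: "T \<in> SS D E b" and ij: "(i, j) \<in> E - D"
  shows "(i + m, j) \<in> E \<Longrightarrow> (i + m, j) \<notin> D \<and> T (i, j) + m \<le> T (i + m, j)"
proof (induction m)
  case 0 then show ?case using ij by simp
next
  case (Suc m)
  have col: "\<And>i i' j. (i, j) \<in> E - D \<Longrightarrow> (i', j) \<in> E - D \<Longrightarrow> i < i' \<Longrightarrow> T (i, j) < T (i', j)"
    using T unfolding SS_def by blast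
  have i1: "1 \<le> i" "1 \<le> j" using shape_pos[OF E] ij by auto
  have "(i + m, j) \<in> E" using shapeD[OF E Suc.prems, of "i + m" j] i1 by simp
  then have IH: "(i + m, j) \<notin> D" "T (i, j) + m \<le> T (i + m, j)" using Suc.IH by auto
  have nD: "(i + Suc m, j) \<notin> D"
  proof
    assume "(i + Suc m, j) \<in> D"
    then have "(i, j) \<in> D" using shapeD[OF D, of "i + Suc m" j i j] i1 by simp
    then show False using ij by simp
  qed
  have "T (i + m, j) < T (i + Suc m, j)"
    using col[of "i + m" j "i + Suc m"] IH \<open>(i + m, j) \<in> E\<close> Suc.prems nD by simp
  then show ?case using IH nD by simp
qed

lemma ssyt_SS: "ssyt n lam = SS {} (boxes lam) n"
  unfolding ssyt_def SS_def by simp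

lemma ssyt_ge_row:
  assumes P: "is_partition lam" and T: "T \<in> ssyt n lam" and ij: "(i, j) \<in> boxes lam"
  shows "i \<le> T (i, j)"
proof -
  have sh: "shape (boxes lam)" using boxes_shape[OF P] .
  have T': "T \<in> SS {} (boxes lam) n" using T ssyt_SS by simp
  have i1: "1 \<le> i" "1 \<le> j" using ij by (auto simp: boxes_mem)
  have b1: "(1, j) \<in> boxes lam - {}" using shapeD[OF sh ij, of 1 j] i1 by simp
  have "T (1, j) + (i - 1) \<le> T (1 + (i - 1), j)"
    using SS_col_chain[OF _ sh T' b1, of "i - 1"] i1 ij by (simp add: shape_def)
  moreover have "1 \<le> T (1, j)" using T' b1 unfolding SS_def by (auto simp: PiE_def Pi_def)
  ultimately show ?thesis using i1 by simp
qed

lemma lhs_chain: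
  fixes x u :: "nat \<Rightarrow> 'a::comm_ring_1"
  assumes P: "is_partition lam"
  shows "factorial_schur n lam x u =
    CP (boxes lam) (map (\<lambda>m a. x m + Wfun u (int m + content a)) [1..<Suc n]) {} (boxes lam)"
proof -
  have "factorial_schur n lam x u = (\<Sum>T\<in>ssyt n lam. \<Prod>a\<in>boxes lam - {}. x (T a) + Wfun u (int (T a) + content a))"
    unfolding factorial_schur_def
  proof (rule sum.cong)
    fix T assume T: "T \<in> ssyt n lam"
    show "(\<Prod>a\<in>boxes lam. x (T a) - u (nat (int (T a) + content a))) =
      (\<Prod>a\<in>boxes lam - {}. x (T a) + Wfun u (int (T a) + content a))"
    proof (simp only: Diff_empty, rule prod.cong)
      fix a assume a: "a \<in> boxes lam"
      obtain i j where ij: "a = (i, j)" by (cases a)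
      have "i \<le> T (i, j)" "1 \<le> j" using ssyt_ge_row[OF P T] a ij by (auto simp: boxes_mem)
      then have "1 \<le> int (T a) + content a" using ij by (simp add: content_def)
      then show "x (T a) - u (nat (int (T a) + content a)) = x (T a) + Wfun u (int (T a) + content a)"
        by (simp add: Wfun_def)
    qed simp
  qed simp
  also have "\<dots> = CP (boxes lam) (map (\<lambda>m a. x m + Wfun u (int m + content a)) [1..<Suc n]) {} (boxes lam)"
    unfolding ssyt_SS
    by (rule chain[OF boxes_fin empty_Sh boxes_Sh[OF P]]) simp
  finally show ?thesis .
qed




lemma sym_unp: "s \<in> symbols n \<Longrightarrow> \<not> is_primed s \<Longrightarrow> s = Unp (symval s) \<and> symval s \<in> {1..n}"
  unfolding symbols_def by auto

lemma sym_pr: "s \<in> symbols n \<Longrightarrow> is_primed s \<Longrightarrow> s = Pr (symval s) \<and> 1 \<le> symval s"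
  unfolding symbols_def by auto

lemma superD1:
  assumes "T \<in> supertableaux n lam"
  shows "T \<in> boxes lam \<rightarrow>\<^sub>E symbols n"
  using assms unfolding supertableaux_def mem_Collect_eq by (elim conjE) blast

lemma superD2:
  assumes "T \<in> supertableaux n lam"
  shows "\<And>i j j'. (i, j) \<in> boxes lam \<Longrightarrow> (i, j') \<in> boxes lam \<Longrightarrow> j < j' \<Longrightarrow> is_primed (T (i, j)) \<Longrightarrow> is_primed (T (i, j'))"
  using assms unfolding supertableaux_def mem_Collect_eq by (elim conjE) blast

lemma superD3:
  assumes "T \<in> supertableaux n lam"
  shows "\<And>i i' j. (i, j) \<in> boxes lam \<Longrightarrow> (i', j) \<in> boxes lam \<Longrightarrow> i < i' \<Longrightarrow> is_primed (T (i, j)) \<Longrightarrow> is_primed (T (i', j))"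
  using assms unfolding supertableaux_def mem_Collect_eq by (elim conjE) blast

lemma superD4:
  assumes "T \<in> supertableaux n lam"
  shows "\<And>i j j'. (i, j) \<in> boxes lam \<Longrightarrow> (i, j') \<in> boxes lam \<Longrightarrow> j < j' \<Longrightarrow> \<not> is_primed (T (i, j)) \<Longrightarrow> \<not> is_primed (T (i, j')) \<Longrightarrow> symval (T (i, j)) \<le> symval (T (i, j'))"
  using assms unfolding supertableaux_def mem_Collect_eq by (elim conjE) blast

lemma superD5:
  assumes "T \<in> supertableaux n lam"
  shows "\<And>i i' j. (i, j) \<in> boxes lam \<Longrightarrow> (i', j) \<in> boxes lam \<Longrightarrow> i < i' \<Longrightarrow> \<not> is_primed (T (i, j)) \<Longrightarrow> \<not> is_primed (T (i', j)) \<Longrightarrow> symval (T (i, j)) < symval (T (i', j))"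
  using assms unfolding supertableaux_def mem_Collect_eq by (elim conjE) blast

lemma superD6:
  assumes "T \<in> supertableaux n lam"
  shows "\<And>i j j'. (i, j) \<in> boxes lam \<Longrightarrow> (i, j') \<in> boxes lam \<Longrightarrow> j < j' \<Longrightarrow> is_primed (T (i, j)) \<Longrightarrow> is_primed (T (i, j')) \<Longrightarrow> symval (T (i, j)) < symval (T (i, j'))"
  using assms unfolding supertableaux_def mem_Collect_eq by (elim conjE) blast

lemma superD7:
  assumes "T \<in> supertableaux n lam"
  shows "\<And>i i' j. (i, j) \<in> boxes lam \<Longrightarrow> (i', j) \<in> boxes lam \<Longrightarrow> i < i' \<Longrightarrow> is_primed (T (i, j)) \<Longrightarrow> is_primed (T (i', j)) \<Longrightarrow> symval (T (i, j)) \<le> symval (T (i', j))"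
  using assms unfolding supertableaux_def mem_Collect_eq by (elim conjE) blast

lemma superD8:
  assumes "T \<in> supertableaux n lam"
  shows "\<And>i j. (i, j) \<in> boxes lam \<Longrightarrow> is_primed (T (i, j)) \<Longrightarrow> int (symval (T (i, j))) \<le> int n - int (col_len lam j) + int j"
  using assms unfolding supertableaux_def mem_Collect_eq by (elim conjE) simp

lemma super_row_chain:
  assumes P: "is_partition lam" and T: "T \<in> supertableaux n lam"
    and ij: "(i, j) \<in> boxes lam" and pr: "is_primed (T (i, j))"
  shows "(i, j + m) \<in> boxes lam \<Longrightarrow> is_primed (T (i, j + m)) \<and> symval (T (i, j)) + m \<le> symval (T (i, j + m))"
proof (induction m)
  case 0 then show ?case using pr by simp
next
  case (Suc m)
  have sh: "shape (boxes lam)" using boxes_shape[OF P] .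
  have i1: "1 \<le> i" "1 \<le> j" using ij by (auto simp: boxes_mem)
  have b: "(i, j + m) \<in> boxes lam" using shapeD[OF sh Suc.prems, of i "j + m"] i1 by simp
  then have IH: "is_primed (T (i, j + m))" "symval (T (i, j)) + m \<le> symval (T (i, j + m))" using Suc.IH by auto
  have p2: "is_primed (T (i, j + Suc m))" using superD2[OF T ij Suc.prems _ pr] by simp
  have "symval (T (i, j + m)) < symval (T (i, j + Suc m))"
    using superD6[OF T b Suc.prems _ IH(1) p2] by simp
  then show ?case using IH p2 by simp
qed

definition nuT :: "nat list \<Rightarrow> ((nat \<times> nat) \<Rightarrow> sym) \<Rightarrow> (nat \<times> nat) set" where
  "nuT lam T = {a \<in> boxes lam. \<not> is_primed (T a)}"

definition Phi :: "nat list \<Rightarrow> ((nat \<times> nat) \<Rightarrow> sym) \<Rightarrow> (nat \<times> nat) set \<times> ((nat \<times> nat \<Rightarrow> nat) \<times> (nat \<times> nat \<Rightarrow> nat))" where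
  "Phi lam T = (nuT lam T, (restrict (\<lambda>a. symval (T a)) (nuT lam T),
      restrict (\<lambda>a. nat (int (symval (T a)) - content a + int (sum_list lam))) (boxes lam - nuT lam T)))"

definition Psi :: "nat list \<Rightarrow> (nat \<times> nat) set \<times> ((nat \<times> nat \<Rightarrow> nat) \<times> (nat \<times> nat \<Rightarrow> nat)) \<Rightarrow> ((nat \<times> nat) \<Rightarrow> sym)" where
  "Psi lam z = (\<lambda>a. if a \<in> fst z then Unp (fst (snd z) a)
     else if a \<in> boxes lam then Pr (nat (int (snd (snd z) a) - int (sum_list lam) + content a)) else undefined)"

definition Gd :: "nat \<Rightarrow> nat list \<Rightarrow> (nat \<times> nat) set \<Rightarrow> (nat \<times> nat \<Rightarrow> nat) set" where
  "Gd n lam nu = {Q \<in> SS nu (boxes lam) (n + sum_list lam).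
     \<forall>a\<in>boxes lam - nu. 1 \<le> int (Q a) - int (sum_list lam) + content a}"

definition S3 :: "nat \<Rightarrow> nat list \<Rightarrow> ((nat \<times> nat) set \<times> ((nat \<times> nat \<Rightarrow> nat) \<times> (nat \<times> nat \<Rightarrow> nat))) set" where
  "S3 n lam = (SIGMA nu:Sh (boxes lam). SS {} nu n \<times> Gd n lam nu)"




lemma nuT_Sh:
  assumes P: "is_partition lam" and T: "T \<in> supertableaux n lam"
  shows "nuT lam T \<in> Sh (boxes lam)"
proof -
  have sh: "shape (boxes lam)" using boxes_shape[OF P] .
  have "shape (nuT lam T)"
    unfolding shape_def
  proof (rule conjI; intro allI impI)
    fix i j assume "(i, j) \<in> nuT lam T" then show "1 \<le> i \<and> 1 \<le> j" by (simp add: nuT_def boxes_mem)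
  next
    fix i j i' j' assume a: "(i, j) \<in> nuT lam T \<and> 1 \<le> i' \<and> i' \<le> i \<and> 1 \<le> j' \<and> j' \<le> j"
    have ij: "(i, j) \<in> boxes lam" "\<not> is_primed (T (i, j))" using a by (auto simp: nuT_def)
    have b1: "(i', j) \<in> boxes lam" using shapeD[OF sh ij(1), of i' j] a by auto
    have b2: "(i', j') \<in> boxes lam" using shapeD[OF sh ij(1), of i' j'] a by auto
    have p1: "\<not> is_primed (T (i', j))"
    proof (cases "i' = i")
      case True then show ?thesis using ij by simp
    next
      case False
      then have "i' < i" using a by simp
      then show ?thesis using superD3[OF T b1 ij(1)] ij(2) by blast
    qed
    have p2: "\<not> is_primed (T (i', j'))"
    proof (cases "j' = j")
      case True then show ?thesis using p1 by simp
    next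
      case False
      then have "j' < j" using a by simp
      then show ?thesis using superD2[OF T b2 b1] p1 by blast
    qed
    show "(i', j') \<in> nuT lam T" using b2 p2 by (simp add: nuT_def)
  qed
  then show ?thesis by (auto simp: Sh_def nuT_def)
qed

lemma qv_props:
  assumes P: "is_partition lam" and T: "T \<in> supertableaux n lam"
    and a: "(i, j) \<in> boxes lam" and pr: "is_primed (T (i, j))"
  shows "2 \<le> int (symval (T (i, j))) - content (i, j) + int (sum_list lam)"
    "int (symval (T (i, j))) - content (i, j) + int (sum_list lam) \<le> int (n + sum_list lam)"
proof -
  have "T (i, j) \<in> symbols n" using PiE_mem[OF superD1[OF T] a] .
  then have k1: "1 \<le> symval (T (i, j))" using sym_pr pr by blast
  have jN: "j \<le> sum_list lam" using boxes_N[OF a] .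
  have i1: "1 \<le> i" using a by (simp add: boxes_mem)
  show "2 \<le> int (symval (T (i, j))) - content (i, j) + int (sum_list lam)"
    using k1 jN i1 by (simp add: content_def)
  have b: "int (symval (T (i, j))) \<le> int n - int (col_len lam j) + int j" using superD8[OF T a pr] .
  have "i \<le> col_len lam j" using col_len_props(1)[OF P a] .
  then show "int (symval (T (i, j))) - content (i, j) + int (sum_list lam) \<le> int (n + sum_list lam)"
    using b by (simp add: content_def)
qed

lemma Phi_in:
  assumes P: "is_partition lam" and T: "T \<in> supertableaux n lam"
  shows "Phi lam T \<in> S3 n lam"
proof -
  define nu where "nu = nuT lam T"
  define N where "N = sum_list lam"
  have nuSh: "nu \<in> Sh (boxes lam)" unfolding nu_def using nuT_Sh[OF P T] .
  define Pm where "Pm = restrict (\<lambda>a. symval (T a)) nu"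
  define qv where "qv = (\<lambda>a. int (symval (T a)) - content a + int N)"
  define Q where "Q = restrict (\<lambda>a. nat (qv a)) (boxes lam - nu)"
  have Tsym: "\<And>a. a \<in> boxes lam \<Longrightarrow> T a \<in> symbols n" using PiE_mem[OF superD1[OF T]] by blast
  have PSS: "Pm \<in> SS {} nu n"
    unfolding SS_def
  proof (intro CollectI conjI allI impI)
    show "Pm \<in> (nu - {}) \<rightarrow>\<^sub>E {1..n}"
    proof (rule PiE_I)
      fix a assume a: "a \<in> nu - {}"
      then have "a \<in> boxes lam" "\<not> is_primed (T a)" unfolding nu_def nuT_def by auto
      then have "symval (T a) \<in> {1..n}" using sym_unp[OF Tsym] by blast
      then show "Pm a \<in> {1..n}" using a unfolding Pm_def by simp
    qed (simp add: Pm_def)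
  next
    fix i j j' assume "(i, j) \<in> nu - {} \<and> (i, j') \<in> nu - {} \<and> j < j'"
    then show "Pm (i, j) \<le> Pm (i, j')" unfolding Pm_def nu_def nuT_def using superD4[OF T] by auto
  next
    fix i i' j assume "(i, j) \<in> nu - {} \<and> (i', j) \<in> nu - {} \<and> i < i'"
    then show "Pm (i, j) < Pm (i', j)" unfolding Pm_def nu_def nuT_def using superD5[OF T] by auto
  qed
  have prm: "is_primed (T a)" if "a \<in> boxes lam - nu" for a using that unfolding nu_def nuT_def by auto
  have qv2: "2 \<le> qv (i, j)" "qv (i, j) \<le> int (n + N)" if "(i, j) \<in> boxes lam - nu" for i j
    using qv_props[OF P T, of i j] prm[OF that] that unfolding qv_def N_def by auto
  have Qint: "int (Q a) = qv a" if "a \<in> boxes lam - nu" for a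
    using qv2[of "fst a" "snd a"] that unfolding Q_def by simp
  have QG: "Q \<in> Gd n lam nu"
    unfolding Gd_def SS_def
  proof (intro CollectI conjI allI impI ballI)
    show "Q \<in> (boxes lam - nu) \<rightarrow>\<^sub>E {1..n + sum_list lam}"
    proof (rule PiE_I)
      fix a assume a: "a \<in> boxes lam - nu"
      then show "Q a \<in> {1..n + sum_list lam}" using Qint[OF a] qv2[of "fst a" "snd a"] unfolding N_def by simp
    qed (auto simp: Q_def)
  next
    fix i j j' assume a: "(i, j) \<in> boxes lam - nu \<and> (i, j') \<in> boxes lam - nu \<and> j < j'"
    have "(i, j + (j' - j)) \<in> boxes lam" using a by simp
    then have "symval (T (i, j)) + (j' - j) \<le> symval (T (i, j + (j' - j)))"
      using super_row_chain[OF P T, of i j "j' - j"] a prm by auto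
    then have "qv (i, j) \<le> qv (i, j')" using a unfolding qv_def content_def by simp
    then show "Q (i, j) \<le> Q (i, j')" using Qint a by (metis of_nat_le_iff)
  next
    fix i i' j assume a: "(i, j) \<in> boxes lam - nu \<and> (i', j) \<in> boxes lam - nu \<and> i < i'"
    have "symval (T (i, j)) \<le> symval (T (i', j))" using superD7[OF T, of i j i'] a prm by auto
    then have "qv (i, j) < qv (i', j)" using a unfolding qv_def content_def by simp
    then show "Q (i, j) < Q (i', j)" using Qint a by (metis of_nat_less_iff)
  next
    fix a assume a: "a \<in> boxes lam - nu"
    show "1 \<le> int (Q a) - int (sum_list lam) + content a"
      unfolding Qint[OF a] qv_def N_def using Tsym[of a] sym_pr[of "T a" n] prm[OF a] a by auto
  qed
  show ?thesis
    unfolding Phi_def S3_def using nuSh PSS QG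
    unfolding Pm_def Q_def qv_def nu_def N_def by auto
qed

lemma Psi_in:
  assumes P: "is_partition lam" and z: "z \<in> S3 n lam"
  shows "Psi lam z \<in> supertableaux n lam"
proof -
  obtain nu Pm Q where zz: "z = (nu, (Pm, Q))" by (cases z) auto
  have nuSh: "nu \<in> Sh (boxes lam)" and PSS: "Pm \<in> SS {} nu n" and QG: "Q \<in> Gd n lam nu"
    using z unfolding zz S3_def by auto
  define N where "N = sum_list lam"
  define T where "T = Psi lam z"
  define kv where "kv = (\<lambda>a. int (Q a) - int N + content a)"
  have nush: "shape nu" "nu \<subseteq> boxes lam" using nuSh by (auto simp: Sh_def)
  have sh: "shape (boxes lam)" using boxes_shape[OF P] .
  have QSS: "Q \<in> SS nu (boxes lam) (n + N)" and kv1: "\<And>a. a \<in> boxes lam - nu \<Longrightarrow> 1 \<le> kv a"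
    using QG unfolding Gd_def kv_def N_def by auto
  have Pm_row: "\<And>i j j'. (i, j) \<in> nu \<Longrightarrow> (i, j') \<in> nu \<Longrightarrow> j < j' \<Longrightarrow> Pm (i, j) \<le> Pm (i, j')"
   and Pm_col: "\<And>i i' j. (i, j) \<in> nu \<Longrightarrow> (i', j) \<in> nu \<Longrightarrow> i < i' \<Longrightarrow> Pm (i, j) < Pm (i', j)"
   and Pm_val: "\<And>a. a \<in> nu \<Longrightarrow> Pm a \<in> {1..n}"
    using PSS unfolding SS_def by (auto simp: PiE_def Pi_def)
  have Q_row: "\<And>i j j'. (i, j) \<in> boxes lam - nu \<Longrightarrow> (i, j') \<in> boxes lam - nu \<Longrightarrow> j < j' \<Longrightarrow> Q (i, j) \<le> Q (i, j')"
   and Q_val: "\<And>a. a \<in> boxes lam - nu \<Longrightarrow> Q a \<le> n + N"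
    using QSS unfolding SS_def by (auto simp: PiE_def Pi_def)
  have Tnu: "T a = Unp (Pm a)" if "a \<in> nu" for a using that unfolding T_def Psi_def zz by simp
  have Tpr: "T a = Pr (nat (kv a))" if "a \<in> boxes lam - nu" for a
    using that unfolding T_def Psi_def zz kv_def N_def by simp
  have prim: "is_primed (T a) \<longleftrightarrow> a \<notin> nu" if "a \<in> boxes lam" for a
    using Tnu Tpr that by (cases "a \<in> nu") auto
  have sv_nu: "symval (T a) = Pm a" if "a \<in> nu" for a using Tnu that by simp
  have sv_pr: "int (symval (T a)) = kv a" if "a \<in> boxes lam - nu" for a
  proof -
    have "1 \<le> kv a" using kv1 that by blast
    then show ?thesis using Tpr[OF that] by simp
  qed
  have nu_left: "(i, j) \<in> nu" if "(i, j') \<in> nu" "(i, j) \<in> boxes lam" "j \<le> j'" for i j j'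
    using shapeD[OF nush(1) that(1), of i j] that(2,3) by (auto simp: boxes_mem)
  have nu_up: "(i, j) \<in> nu" if "(i', j) \<in> nu" "(i, j) \<in> boxes lam" "i \<le> i'" for i i' j
    using shapeD[OF nush(1) that(1), of i j] that(2,3) by (auto simp: boxes_mem)
  have "T \<in> supertableaux n lam"
    unfolding supertableaux_def mem_Collect_eq
  proof (intro conjI allI impI)
    show "T \<in> boxes lam \<rightarrow>\<^sub>E symbols n"
    proof (rule PiE_I)
      fix a assume a: "a \<in> boxes lam"
      show "T a \<in> symbols n"
      proof (cases "a \<in> nu")
        case True then show ?thesis using Tnu Pm_val unfolding symbols_def by auto
      next
        case False
        then have "1 \<le> kv a" using kv1[of a] a by blast
        then have "1 \<le> nat (kv a)" by simp
        then show ?thesis using Tpr[of a] a False unfolding symbols_def by auto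
      qed
    next
      fix a assume "a \<notin> boxes lam"
      then show "T a = undefined" using nush(2) unfolding T_def Psi_def zz by auto
    qed
  next
    fix i j j' assume a: "(i, j) \<in> boxes lam \<and> (i, j') \<in> boxes lam \<and> j < j'"
    show "\<not> (is_primed (T (i, j)) \<and> \<not> is_primed (T (i, j')))"
      using prim a nu_left[of i j' j] by auto
  next
    fix i i' j assume a: "(i, j) \<in> boxes lam \<and> (i', j) \<in> boxes lam \<and> i < i'"
    show "\<not> (is_primed (T (i, j)) \<and> \<not> is_primed (T (i', j)))"
      using prim a nu_up[of i' j i] by auto
  next
    fix i j j' assume a: "(i, j) \<in> boxes lam \<and> (i, j') \<in> boxes lam \<and> j < j' \<and>
        \<not> is_primed (T (i, j)) \<and> \<not> is_primed (T (i, j'))"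
    then have "(i, j) \<in> nu" "(i, j') \<in> nu" using prim by auto
    then show "symval (T (i, j)) \<le> symval (T (i, j'))" using sv_nu Pm_row a by simp
  next
    fix i i' j assume a: "(i, j) \<in> boxes lam \<and> (i', j) \<in> boxes lam \<and> i < i' \<and>
        \<not> is_primed (T (i, j)) \<and> \<not> is_primed (T (i', j))"
    then have "(i, j) \<in> nu" "(i', j) \<in> nu" using prim by auto
    then show "symval (T (i, j)) < symval (T (i', j))" using sv_nu Pm_col a by simp
  next
    fix i j j' assume a: "(i, j) \<in> boxes lam \<and> (i, j') \<in> boxes lam \<and> j < j' \<and>
        is_primed (T (i, j)) \<and> is_primed (T (i, j'))"
    then have b: "(i, j) \<in> boxes lam - nu" "(i, j') \<in> boxes lam - nu" using prim by auto
    have "Q (i, j) \<le> Q (i, j')" using Q_row[OF b] a by simp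
    then have "kv (i, j) < kv (i, j')" using a unfolding kv_def content_def by simp
    then have "int (symval (T (i, j))) < int (symval (T (i, j')))" using sv_pr b by simp
    then show "symval (T (i, j)) < symval (T (i, j'))" by simp
  next
    fix i i' j assume a: "(i, j) \<in> boxes lam \<and> (i', j) \<in> boxes lam \<and> i < i' \<and>
        is_primed (T (i, j)) \<and> is_primed (T (i', j))"
    then have b: "(i, j) \<in> boxes lam - nu" "(i', j) \<in> boxes lam - nu" using prim by auto
    have "(i + (i' - i), j) \<in> boxes lam" using a by simp
    then have "Q (i, j) + (i' - i) \<le> Q (i + (i' - i), j)"
      using SS_col_chain[OF nush(1) sh QSS b(1), of "i' - i"] by blast
    then have "Q (i, j) + (i' - i) \<le> Q (i', j)" using a by simp
    then have "kv (i, j) \<le> kv (i', j)" using a unfolding kv_def content_def by simp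
    then have "int (symval (T (i, j))) \<le> int (symval (T (i', j)))" using sv_pr b by simp
    then show "symval (T (i, j)) \<le> symval (T (i', j))" by simp
  next
    fix i j assume a: "(i, j) \<in> boxes lam \<and> is_primed (T (i, j))"
    then have b: "(i, j) \<in> boxes lam - nu" using prim by auto
    define c where "c = col_len lam j"
    have ic: "i \<le> c" "(c, j) \<in> boxes lam" using col_len_props[OF P, of i j] a unfolding c_def by auto
    have "(i + (c - i), j) \<in> boxes lam" using ic by simp
    then have ch: "(i + (c - i), j) \<notin> nu \<and> Q (i, j) + (c - i) \<le> Q (i + (c - i), j)"
      using SS_col_chain[OF nush(1) sh QSS b(1), of "c - i"] by blast
    then have "Q (i, j) + (c - i) \<le> n + N" using Q_val[of "(c, j)"] ic by simp
    then have "kv (i, j) \<le> int n - int c + int j" using ic unfolding kv_def content_def by simp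
    then show "int (symval (T (i, j))) \<le> int n - int (col_len lam j) + int j" using sv_pr b c_def by simp
  qed
  then show ?thesis unfolding T_def .
qed

lemma Phi_Psi:
  assumes z: "z \<in> S3 n lam"
  shows "Phi lam (Psi lam z) = z"
proof -
  obtain nu Pm Q where zz: "z = (nu, (Pm, Q))" by (cases z) auto
  have nuSh: "nu \<in> Sh (boxes lam)" and PSS: "Pm \<in> SS {} nu n" and QG: "Q \<in> Gd n lam nu"
    using z unfolding zz S3_def by auto
  define N where "N = sum_list lam"
  define kv where "kv = (\<lambda>a. int (Q a) - int N + content a)"
  have nusub: "nu \<subseteq> boxes lam" using nuSh by (auto simp: Sh_def)
  have QSS: "Q \<in> SS nu (boxes lam) (n + N)" and kv1: "\<And>a. a \<in> boxes lam - nu \<Longrightarrow> 1 \<le> kv a"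
    using QG unfolding Gd_def kv_def N_def by auto
  have Pext: "Pm \<in> extensional nu" using PSS unfolding SS_def by (auto simp: PiE_def)
  have Qext: "Q \<in> extensional (boxes lam - nu)" using QSS unfolding SS_def by (auto simp: PiE_def)
  have nuEq: "nuT lam (Psi lam z) = nu"
    unfolding nuT_def Psi_def zz using nusub by auto
  have e1: "restrict (\<lambda>a. symval (Psi lam z a)) nu = Pm"
  proof
    fix a show "restrict (\<lambda>a. symval (Psi lam z a)) nu a = Pm a"
    proof (cases "a \<in> nu")
      case True then show ?thesis unfolding Psi_def zz by simp
    next
      case False then show ?thesis using extensional_arb[OF Pext False] by simp
    qed
  qed
  have e2: "restrict (\<lambda>a. nat (int (symval (Psi lam z a)) - content a + int N)) (boxes lam - nu) = Q"
  proof
    fix a show "restrict (\<lambda>a. nat (int (symval (Psi lam z a)) - content a + int N)) (boxes lam - nu) a = Q a"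
    proof (cases "a \<in> boxes lam - nu")
      case True
      have k: "1 \<le> kv a" using kv1[OF True] .
      have "Psi lam z a = Pr (nat (kv a))" using True unfolding Psi_def zz kv_def N_def by simp
      then have "int (symval (Psi lam z a)) = kv a" using k by simp
      then show ?thesis using True unfolding kv_def by simp
    next
      case False then show ?thesis using extensional_arb[OF Qext False] False by auto
    qed
  qed
  show ?thesis unfolding Phi_def nuEq e1 N_def[symmetric] e2 using zz by simp
qed

lemma Psi_Phi:
  assumes P: "is_partition lam" and T: "T \<in> supertableaux n lam"
  shows "Psi lam (Phi lam T) = T"
proof
  fix a
  have Tsym: "\<And>a. a \<in> boxes lam \<Longrightarrow> T a \<in> symbols n" using PiE_mem[OF superD1[OF T]] by blast
  show "Psi lam (Phi lam T) a = T a"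
  proof (cases "a \<in> nuT lam T")
    case True
    then have "a \<in> boxes lam" "\<not> is_primed (T a)" unfolding nuT_def by auto
    then have "T a = Unp (symval (T a))" using sym_unp[OF Tsym] by blast
    then show ?thesis using True unfolding Psi_def Phi_def by simp
  next
    case False
    show ?thesis
    proof (cases "a \<in> boxes lam")
      case True
      obtain i j where ij: "a = (i, j)" by (cases a)
      have pr: "is_primed (T a)" using True False unfolding nuT_def by auto
      have q2: "2 \<le> int (symval (T a)) - content a + int (sum_list lam)"
        using qv_props(1)[OF P T, of i j] True pr ij by simp
      have "T a = Pr (symval (T a))" using sym_pr[OF Tsym[OF True] pr] by blast
      then show ?thesis using True False q2 unfolding Psi_def Phi_def by simp
    next
      case False2: False
      have "T a = undefined" using superD1[OF T] False2 by (meson PiE_E)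
      then show ?thesis using False False2 unfolding Psi_def Phi_def by simp
    qed
  qed
qed

lemma Psi_bij:
  assumes P: "is_partition lam"
  shows "bij_betw (Psi lam) (S3 n lam) (supertableaux n lam)"
  by (rule bij_betw_byWitness[where f' = "Phi lam"])
     (use Phi_Psi Psi_Phi[OF P] Psi_in[OF P] Phi_in[OF P] in auto)

lemma wt_Psi:
  fixes x u :: "nat \<Rightarrow> 'a::comm_ring_1"
  assumes z: "(nu, (Pm, Q)) \<in> S3 n lam"
  shows "(\<Prod>a \<in> {a \<in> boxes lam. \<not> is_primed (Psi lam (nu, (Pm, Q)) a)}. x (symval (Psi lam (nu, (Pm, Q)) a))) *
       (\<Prod>a \<in> {a \<in> boxes lam. is_primed (Psi lam (nu, (Pm, Q)) a)}. - u (symval (Psi lam (nu, (Pm, Q)) a)))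
     = (\<Prod>a\<in>nu - {}. x (Pm a)) * (\<Prod>a\<in>boxes lam - nu. Wfun u (int (Q a) - int (sum_list lam) + content a))"
proof -
  have nuSh: "nu \<in> Sh (boxes lam)" and QG: "Q \<in> Gd n lam nu" using z unfolding S3_def by auto
  have nusub: "nu \<subseteq> boxes lam" using nuSh by (auto simp: Sh_def)
  have kv1: "\<And>a. a \<in> boxes lam - nu \<Longrightarrow> 1 \<le> int (Q a) - int (sum_list lam) + content a"
    using QG unfolding Gd_def by auto
  have s1: "{a \<in> boxes lam. \<not> is_primed (Psi lam (nu, (Pm, Q)) a)} = nu - {}"
    using nusub unfolding Psi_def by auto
  have s2: "{a \<in> boxes lam. is_primed (Psi lam (nu, (Pm, Q)) a)} = boxes lam - nu"
    unfolding Psi_def by auto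
  have p1: "(\<Prod>a\<in>nu - {}. x (symval (Psi lam (nu, (Pm, Q)) a))) = (\<Prod>a\<in>nu - {}. x (Pm a))"
    by (rule prod.cong) (auto simp: Psi_def)
  have p2: "(\<Prod>a\<in>boxes lam - nu. - u (symval (Psi lam (nu, (Pm, Q)) a)))
      = (\<Prod>a\<in>boxes lam - nu. Wfun u (int (Q a) - int (sum_list lam) + content a))"
  proof (rule prod.cong)
    fix a assume a: "a \<in> boxes lam - nu"
    have k: "1 \<le> int (Q a) - int (sum_list lam) + content a" using kv1[OF a] .
    have "Psi lam (nu, (Pm, Q)) a = Pr (nat (int (Q a) - int (sum_list lam) + content a))"
      using a unfolding Psi_def by simp
    then show "- u (symval (Psi lam (nu, (Pm, Q)) a)) = Wfun u (int (Q a) - int (sum_list lam) + content a)"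
      using k by (simp add: Wfun_def)
  qed simp
  show ?thesis unfolding s1 s2 p1 p2 ..
qed

lemma rhs_split:
  fixes x u :: "nat \<Rightarrow> 'a::comm_ring_1"
  assumes P: "is_partition lam"
  shows "(\<Sum>T \<in> supertableaux n lam.
       (\<Prod>a \<in> {a \<in> boxes lam. \<not> is_primed (T a)}. x (symval (T a))) *
       (\<Prod>a \<in> {a \<in> boxes lam. is_primed (T a)}. - u (symval (T a))))
    = (\<Sum>nu\<in>Sh (boxes lam). (\<Sum>Pm\<in>SS {} nu n. \<Prod>a\<in>nu - {}. x (Pm a)) *
         (\<Sum>Q\<in>SS nu (boxes lam) (n + sum_list lam). \<Prod>a\<in>boxes lam - nu. Wfun u (int (Q a) - int (sum_list lam) + content a)))"
proof -
  define xw where "xw = (\<lambda>(nu::(nat \<times> nat) set) (Pm::nat \<times> nat \<Rightarrow> nat). \<Prod>a\<in>nu - {}. x (Pm a))"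
  define uw where "uw = (\<lambda>nu Q. \<Prod>a\<in>boxes lam - nu. Wfun u (int (Q a) - int (sum_list lam) + content a))"
  have finSh: "finite (Sh (boxes lam))" using finite_Sh[OF boxes_fin] .
  have finSS: "finite (SS D (boxes lam) b)" for D b using finite_SS[OF boxes_fin] .
  have finSS2: "finite (SS {} nu n)" if "nu \<in> Sh (boxes lam)" for nu
    using that finite_SS[of nu] finite_subset[OF _ boxes_fin] by (auto simp: Sh_def)
  have finGd: "finite (Gd n lam nu)" for nu
    by (rule finite_subset[OF _ finSS[of nu "n + sum_list lam"]]) (auto simp: Gd_def)
  have "(\<Sum>T \<in> supertableaux n lam.
       (\<Prod>a \<in> {a \<in> boxes lam. \<not> is_primed (T a)}. x (symval (T a))) *
       (\<Prod>a \<in> {a \<in> boxes lam. is_primed (T a)}. - u (symval (T a))))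
    = (\<Sum>z \<in> S3 n lam.
       (\<Prod>a \<in> {a \<in> boxes lam. \<not> is_primed (Psi lam z a)}. x (symval (Psi lam z a))) *
       (\<Prod>a \<in> {a \<in> boxes lam. is_primed (Psi lam z a)}. - u (symval (Psi lam z a))))"
    by (rule sum.reindex_bij_betw[OF Psi_bij[OF P], symmetric])
  also have "\<dots> = (\<Sum>z \<in> S3 n lam. case z of (nu, (Pm, Q)) \<Rightarrow> xw nu Pm * uw nu Q)"
  proof (rule sum.cong)
    fix z assume z: "z \<in> S3 n lam"
    obtain nu Pm Q where zz: "z = (nu, (Pm, Q))" by (cases z) auto
    show "(\<Prod>a \<in> {a \<in> boxes lam. \<not> is_primed (Psi lam z a)}. x (symval (Psi lam z a))) *
       (\<Prod>a \<in> {a \<in> boxes lam. is_primed (Psi lam z a)}. - u (symval (Psi lam z a))) =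
       (case z of (nu, (Pm, Q)) \<Rightarrow> xw nu Pm * uw nu Q)"
      using wt_Psi[of nu Pm Q n lam x u] z unfolding zz xw_def uw_def by simp
  qed simp
  also have "\<dots> = (\<Sum>nu\<in>Sh (boxes lam). \<Sum>PQ\<in>SS {} nu n \<times> Gd n lam nu. case PQ of (Pm, Q) \<Rightarrow> xw nu Pm * uw nu Q)"
    unfolding S3_def
    by (rule sum.Sigma[symmetric]) (use finSh finSS2 finGd in auto)
  also have "\<dots> = (\<Sum>nu\<in>Sh (boxes lam). (\<Sum>Pm\<in>SS {} nu n. xw nu Pm) * (\<Sum>Q\<in>Gd n lam nu. uw nu Q))"
    by (rule sum.cong) (simp_all add: sum.cartesian_product[symmetric] sum_product)
  also have "\<dots> = (\<Sum>nu\<in>Sh (boxes lam). (\<Sum>Pm\<in>SS {} nu n. xw nu Pm) * (\<Sum>Q\<in>SS nu (boxes lam) (n + sum_list lam). uw nu Q))"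
  proof (rule sum.cong)
    fix nu assume nu: "nu \<in> Sh (boxes lam)"
    have "(\<Sum>Q\<in>Gd n lam nu. uw nu Q) = (\<Sum>Q\<in>SS nu (boxes lam) (n + sum_list lam). uw nu Q)"
    proof (rule sum.mono_neutral_left[OF finSS])
      show "Gd n lam nu \<subseteq> SS nu (boxes lam) (n + sum_list lam)" by (auto simp: Gd_def)
      show "\<forall>Q\<in>SS nu (boxes lam) (n + sum_list lam) - Gd n lam nu. uw nu Q = 0"
      proof
        fix Q assume Q: "Q \<in> SS nu (boxes lam) (n + sum_list lam) - Gd n lam nu"
        then obtain a where a: "a \<in> boxes lam - nu" "\<not> 1 \<le> int (Q a) - int (sum_list lam) + content a"
          unfolding Gd_def by auto
        have "Wfun u (int (Q a) - int (sum_list lam) + content a) = 0" using a(2) by (simp add: Wfun_def)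
        then show "uw nu Q = 0" unfolding uw_def
          by (intro prod_zero) (use a boxes_fin in auto)
      qed
    qed
    then show "(\<Sum>Pm\<in>SS {} nu n. xw nu Pm) * (\<Sum>Q\<in>Gd n lam nu. uw nu Q) =
      (\<Sum>Pm\<in>SS {} nu n. xw nu Pm) * (\<Sum>Q\<in>SS nu (boxes lam) (n + sum_list lam). uw nu Q)" by simp
  qed simp
  finally show ?thesis unfolding xw_def uw_def .
qed




declare upt_Suc[simp del]

lemma Ys_length: "length (Ys u N ys q) = length ys"
  by (induction ys arbitrary: q) auto

lemma Ys_nth: "t < length ys \<Longrightarrow> Ys u N ys q ! t = Yf u N (ys ! t) (q + int t)"
proof (induction ys arbitrary: q t)
  case Nil then show ?case by simp
next
  case (Cons y ys)
  show ?case
  proof (cases t)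
    case 0 then show ?thesis by simp
  next
    case (Suc t')
    then show ?thesis using Cons by (simp add: algebra_simps)
  qed
qed

lemma CP_Ws_empty:
  assumes L: "finite L"
  shows "q + int K \<le> int N + 1 \<Longrightarrow> CP L (Ws u N q K) {} G = (if G = {} then 1 else 0)"
proof (induction K arbitrary: q)
  case 0 then show ?case by (auto simp: Ws_0)
next
  case (Suc K)
  have qN: "q \<le> int N" using Suc.prems by simp
  have "CP L (Ws u N q (Suc K)) {} G = (\<Sum>F\<in>Sh L. step (Wf u N q) {} F * CP L (Ws u N (q + 1) K) F G)"
    by (simp add: Ws_Suc)
  also have "\<dots> = (\<Sum>F\<in>Sh L. if F = {} then CP L (Ws u N (q + 1) K) F G else 0)"
    by (rule sum.cong) (simp_all add: step_Wf_empty[OF L _ qN])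
  also have "\<dots> = CP L (Ws u N (q + 1) K) {} G"
    using finite_Sh[OF L] empty_Sh[of L] by (simp add: sum.delta')
  also have "\<dots> = (if G = {} then 1 else 0)" using Suc.IH[of "q + 1"] Suc.prems by simp
  finally show ?case .
qed

lemma content_le: "a \<in> boxes lam \<Longrightarrow> content a \<le> int (sum_list lam) - 1"
proof -
  assume a: "a \<in> boxes lam"
  obtain i j where ij: "a = (i, j)" by (cases a)
  have "j \<le> sum_list lam" "1 \<le> i" using boxes_N[of i j lam] a ij by (auto simp: boxes_mem)
  then show ?thesis using ij by (simp add: content_def)
qed

theorem main:
  fixes n :: nat and lam :: "nat list"
    and x :: "nat \<Rightarrow> 'a::comm_ring_1" and u :: "nat \<Rightarrow> 'a"
  assumes P: "is_partition lam"
  shows "factorial_schur n lam x u =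
    (\<Sum>T \<in> supertableaux n lam.
       (\<Prod>a \<in> {a \<in> boxes lam. \<not> is_primed (T a)}. x (symval (T a))) *
       (\<Prod>a \<in> {a \<in> boxes lam. is_primed (T a)}. - u (symval (T a))))"
proof -
  define N where "N = sum_list lam"
  have L: "finite (boxes lam)" "\<forall>(i, j)\<in>boxes lam. i \<le> length lam" using boxes_fin boxes_R by auto
  have LSh: "boxes lam \<in> Sh (boxes lam)" using boxes_Sh[OF P] .
  define XL where "XL = map (\<lambda>m (a::nat \<times> nat). x m) [1..<Suc n]"
  define UL where "UL = map (\<lambda>q a. Wfun u (int q - int N + content a)) [1..<Suc (n + N)]"
  define xs where "xs = map x [1..<Suc n]"
  have "(\<Sum>T \<in> supertableaux n lam.
       (\<Prod>a \<in> {a \<in> boxes lam. \<not> is_primed (T a)}. x (symval (T a))) *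
       (\<Prod>a \<in> {a \<in> boxes lam. is_primed (T a)}. - u (symval (T a))))
    = (\<Sum>nu\<in>Sh (boxes lam). CP (boxes lam) XL {} nu * CP (boxes lam) UL nu (boxes lam))"
    unfolding rhs_split[OF P]
  proof (rule sum.cong)
    fix nu assume nu: "nu \<in> Sh (boxes lam)"
    have nuL: "nu \<subseteq> (boxes lam)" using nu by (simp add: Sh_def)
    have c1: "(\<Sum>Pm\<in>SS {} nu n. \<Prod>a\<in>nu - {}. x (Pm a)) = CP (boxes lam) XL {} nu"
      using chain[OF L(1) empty_Sh nu, where b=n and f="\<lambda>m a. x m"] unfolding XL_def by simp
    have c2: "(\<Sum>Q\<in>SS nu (boxes lam) (n + N). \<Prod>a\<in>(boxes lam) - nu. Wfun u (int (Q a) - int N + content a)) = CP (boxes lam) UL nu (boxes lam)"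
      using chain[OF L(1) nu LSh nuL, where b="n + N" and f="\<lambda>q a. Wfun u (int q - int N + content a)"] unfolding UL_def by simp
    show "(\<Sum>Pm\<in>SS {} nu n. \<Prod>a\<in>nu - {}. x (Pm a)) *
        (\<Sum>Q\<in>SS nu (boxes lam) (n + sum_list lam). \<Prod>a\<in>(boxes lam) - nu. Wfun u (int (Q a) - int (sum_list lam) + content a)) =
        CP (boxes lam) XL {} nu * CP (boxes lam) UL nu (boxes lam)" using c1 c2 unfolding N_def by simp
  qed simp
  also have "\<dots> = CP (boxes lam) (XL @ UL) {} (boxes lam)"
    using CP_append[OF L(1) empty_Sh, of XL UL "boxes lam"] by simp
  also have "\<dots> = CP (boxes lam) (Ys u N xs (1 - int n) @ Ws u N (1 - int n + int (length xs)) (n + N) @ []) {} (boxes lam)"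
  proof (rule CP_agree)
    have A1: "list_all2 (\<lambda>g g'. \<forall>a\<in>(boxes lam). g a = g' a) XL (Ys u N xs (1 - int n))"
    proof (rule list_all2_all_nthI)
      show "length XL = length (Ys u N xs (1 - int n))" unfolding XL_def xs_def Ys_length by simp
    next
      fix t assume t: "t < length XL"
      then have tn: "t < n" unfolding XL_def by simp
      show "\<forall>a\<in>(boxes lam). (XL ! t) a = (Ys u N xs (1 - int n) ! t) a"
      proof
        fix a assume a: "a \<in> (boxes lam)"
        have "content a \<le> int N - 1" using content_le[of a lam] a unfolding N_def by simp
        then have "Wfun u (1 - int n + int t - int N + content a) = 0" using tn by (simp add: Wfun_def)
        then show "(XL ! t) a = (Ys u N xs (1 - int n) ! t) a"
          using tn unfolding XL_def xs_def by (simp add: Ys_nth Yf_def nth_upt)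
      qed
    qed
    have A2: "UL = Ws u N (1 - int n + int (length xs)) (n + N) @ []"
    proof (rule nth_equalityI)
      show "length UL = length (Ws u N (1 - int n + int (length xs)) (n + N) @ [])"
        unfolding UL_def Ws_def xs_def by simp
    next
      fix t assume "t < length UL"
      then have t: "t < n + N" unfolding UL_def by simp
      show "UL ! t = (Ws u N (1 - int n + int (length xs)) (n + N) @ []) ! t"
        using t unfolding UL_def Ws_def xs_def Wf_def by (simp add: nth_upt algebra_simps)
    qed
    show "list_all2 (\<lambda>g g'. \<forall>a\<in>(boxes lam). g a = g' a) (XL @ UL) (Ys u N xs (1 - int n) @ Ws u N (1 - int n + int (length xs)) (n + N) @ [])"
      unfolding A2[symmetric] by (rule list_all2_appendI[OF A1]) (simp add: list_all2_refl)
  qed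
  also have "\<dots> = CP (boxes lam) (Ws u N (1 - int n) (n + N) @ Ys u N xs (1 - int n + int (n + N)) @ []) {} (boxes lam)"
    by (rule move_all[OF L empty_Sh])
  also have "\<dots> = (\<Sum>G\<in>Sh (boxes lam). CP (boxes lam) (Ws u N (1 - int n) (n + N)) {} G * CP (boxes lam) (Ys u N xs (1 - int n + int (n + N))) G (boxes lam))"
    using CP_append[OF L(1) empty_Sh] by simp
  also have "\<dots> = (\<Sum>G\<in>Sh (boxes lam). if G = {} then CP (boxes lam) (Ys u N xs (1 - int n + int (n + N))) G (boxes lam) else 0)"
    by (rule sum.cong) (simp_all add: CP_Ws_empty[OF L(1)])
  also have "\<dots> = CP (boxes lam) (Ys u N xs (1 - int n + int (n + N))) {} (boxes lam)"
    using finite_Sh[OF L(1)] empty_Sh[of "boxes lam"] by (simp add: sum.delta')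
  also have "\<dots> = CP (boxes lam) (map (\<lambda>m a. x m + Wfun u (int m + content a)) [1..<Suc n]) {} (boxes lam)"
  proof (rule CP_agree, rule list_all2_all_nthI)
    show "length (Ys u N xs (1 - int n + int (n + N))) = length (map (\<lambda>m a. x m + Wfun u (int m + content a)) [1..<Suc n])"
      unfolding xs_def Ys_length by simp
  next
    fix t assume "t < length (Ys u N xs (1 - int n + int (n + N)))"
    then have t: "t < n" unfolding xs_def Ys_length by simp
    show "\<forall>a\<in>(boxes lam). (Ys u N xs (1 - int n + int (n + N)) ! t) a = (map (\<lambda>m a. x m + Wfun u (int m + content a)) [1..<Suc n] ! t) a"
      using t unfolding xs_def by (simp add: Ys_nth Yf_def nth_upt algebra_simps)
  qed
  also have "\<dots> = factorial_schur n lam x u"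
    using lhs_chain[OF P, of n x u] by simp
  finally show ?thesis ..
qed


theorem proposition4p1:
  fixes n :: nat and lam :: "nat list"
    and x :: "nat \<Rightarrow> 'a::comm_ring_1" and u :: "nat \<Rightarrow> 'a"
  assumes "0 < n" and "is_partition lam" and "length lam \<le> n"
  shows "factorial_schur n lam x u =
    (\<Sum>T \<in> supertableaux n lam.
       (\<Prod>a \<in> {a \<in> boxes lam. \<not> is_primed (T a)}. x (symval (T a))) *
       (\<Prod>a \<in> {a \<in> boxes lam. is_primed (T a)}. - u (symval (T a))))"
  using main[OF assms(2)] .

end
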